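(* Let $\mathcal{N}$ be a cactus network and $u\succcurlyeq v$ vertices of $\mathcal{N}$. Then the union of all directed paths from $u$ to $v$ is a branching path, i.e., there exist $m\ge0$ and vertices $s_1,t_1,\dots,s_m,t_m$ such that this union equals the union of the pieces of the alternating sequence $$u\rightarrow s_1\rightrightarrows t_1\rightarrow s_2\rightrightarrows t_2\rightarrow\cdots\rightarrow s_m\rightrightarrows t_m\rightarrow v,$$ where each $x\rightarrow y$ denotes the unique directed path from $x$ to $y$ (possibly of length $0$; uniqueness being part of the claim), and each $s_j\rightrightarrows t_j$ is a simple branching path.
   Context: A cactus network is a finite directed acyclic graph $\mathcal{N}$ with a unique vertex of indegree $0$ (the root) such that in its underlying undirected graph $\mathcal{N}^\star$ every edge belongs to at most one simple cycle. $u\succcurlyeq v$ means there is a directed path (possibly of length $0$) from $u$ to $v$. A lowest common ancestor of a set $V$ is a vertex $u$ that is an ancestor of all of $V$ with no proper descendant having this property; in a cactus network it is unique. A sink is a vertex of indegree $2$. If $t$ is a sink with parents $p_l,p_r$, its source is the lowest common ancestor $s$ of $\{p_l,p_r\}$; the directed paths from $s$ to $p_l$ and from $s$ to $p_r$ are unique and edge-disjoint, and appending the edges $(p_l,t)$, $(p_r,t)$ gives two paths $P_1,P_2$ from $s$ to $t$. The unordered pair $\{P_1,P_2\}$ (viewed as the union of these two paths) is called a simple branching path, denoted $s\rightrightarrows t$, and $P_1,P_2$ are its branches. *)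

theory Defs
  imports Main
begin

definition reach :: "('a \<times> 'a) set \<Rightarrow> 'a \<Rightarrow> 'a \<Rightarrow> bool" where
  "reach E u v \<longleftrightarrow> (u, v) \<in> E\<^sup>*"

definition is_dpath :: "('a \<times> 'a) set \<Rightarrow> 'a list \<Rightarrow> 'a \<Rightarrow> 'a \<Rightarrow> bool" where
  "is_dpath E xs u v \<longleftrightarrow> xs \<noteq> [] \<and> hd xs = u \<and> last xs = v \<and>
     (\<forall>i. Suc i < length xs \<longrightarrow> (xs ! i, xs ! Suc i) \<in> E)"

definition path_edges :: "'a list \<Rightarrow> ('a \<times> 'a) set" where
  "path_edges xs = {(xs ! i, xs ! Suc i) | i. Suc i < length xs}"

definition paths_V :: "('a \<times> 'a) set \<Rightarrow> 'a \<Rightarrow> 'a \<Rightarrow> 'a set" where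
  "paths_V E u v = (\<Union> {set xs | xs. is_dpath E xs u v})"

definition paths_E :: "('a \<times> 'a) set \<Rightarrow> 'a \<Rightarrow> 'a \<Rightarrow> ('a \<times> 'a) set" where
  "paths_E E u v = (\<Union> {path_edges xs | xs. is_dpath E xs u v})"

text \<open>Simple cycles of the underlying undirected graph, represented by their sets of
  undirected edges.\<close>
definition undir_cycles :: "('a \<times> 'a) set \<Rightarrow> 'a set set set" where
  "undir_cycles E = {{{cs ! i, cs ! ((Suc i) mod length cs)} | i. i < length cs} | cs.
      distinct cs \<and> length cs \<ge> 3 \<and>
      (\<forall>i < length cs. (cs ! i, cs ! ((Suc i) mod length cs)) \<in> E \<or>
                        (cs ! ((Suc i) mod length cs), cs ! i) \<in> E)}"

definition cactus_network :: "'a set \<Rightarrow> ('a \<times> 'a) set \<Rightarrow> bool" where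
  "cactus_network V E \<longleftrightarrow>
     finite V \<and> E \<subseteq> V \<times> V \<and>
     (\<forall>x. (x, x) \<notin> E\<^sup>+) \<and>
     (\<exists>!r. r \<in> V \<and> (\<forall>x. (x, r) \<notin> E)) \<and>
     (\<forall>x y. (x, y) \<in> E \<longrightarrow> (\<forall>C1 \<in> undir_cycles E. \<forall>C2 \<in> undir_cycles E.
          {x, y} \<in> C1 \<longrightarrow> {x, y} \<in> C2 \<longrightarrow> C1 = C2))"

definition parents :: "('a \<times> 'a) set \<Rightarrow> 'a \<Rightarrow> 'a set" where
  "parents E t = {p. (p, t) \<in> E}"

definition is_sink :: "('a \<times> 'a) set \<Rightarrow> 'a \<Rightarrow> bool" where
  "is_sink E t \<longleftrightarrow> card (parents E t) = 2"

definition is_lca :: "'a set \<Rightarrow> ('a \<times> 'a) set \<Rightarrow> 'a set \<Rightarrow> 'a \<Rightarrow> bool" where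
  "is_lca V E A w \<longleftrightarrow> w \<in> V \<and> (\<forall>a \<in> A. reach E w a) \<and>
     (\<forall>w'. w' \<noteq> w \<and> reach E w w' \<and> (\<forall>a \<in> A. reach E w' a) \<longrightarrow> False)"

definition is_sbp :: "'a set \<Rightarrow> ('a \<times> 'a) set \<Rightarrow> 'a \<Rightarrow> 'a \<Rightarrow> bool" where
  "is_sbp V E s t \<longleftrightarrow> t \<in> V \<and> is_sink E t \<and> is_lca V E (parents E t) s"

definition sbp_V :: "('a \<times> 'a) set \<Rightarrow> 'a \<Rightarrow> 'a \<Rightarrow> 'a set" where
  "sbp_V E s t = insert t (\<Union>p \<in> parents E t. paths_V E s p)"

definition sbp_E :: "('a \<times> 'a) set \<Rightarrow> 'a \<Rightarrow> 'a \<Rightarrow> ('a \<times> 'a) set" where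
  "sbp_E E s t = (\<Union>p \<in> parents E t. insert (p, t) (paths_E E s p))"

end

theory Submission
  imports Defs
begin

definition acyc :: "('a \<times> 'a) set \<Rightarrow> bool" where
  "acyc E \<longleftrightarrow> (\<forall>x. (x, x) \<notin> E\<^sup>+)"

lemma is_dpath_succ:
  "is_dpath E xs u v \<longleftrightarrow> xs \<noteq> [] \<and> hd xs = u \<and> last xs = v \<and> successively (\<lambda>x y. (x,y) \<in> E) xs"
  unfolding is_dpath_def successively_conv_nth by auto

lemma path_edges_Nil[simp]: "path_edges [] = {}"
  by (simp add: path_edges_def)
lemma path_edges_single[simp]: "path_edges [x] = {}"
  by (simp add: path_edges_def)
lemma path_edges_nth: "(a, b) \<in> path_edges xs \<longleftrightarrow> (\<exists>i. Suc i < length xs \<and> a = xs ! i \<and> b = xs ! Suc i)"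
  unfolding path_edges_def by auto

lemma path_edges_Cons2[simp]: "path_edges (x # y # zs) = insert (x, y) (path_edges (y # zs))"
proof (rule set_eqI, clarify)
  fix a b
  show "(a, b) \<in> path_edges (x # y # zs) \<longleftrightarrow> (a, b) \<in> insert (x, y) (path_edges (y # zs))"
  proof
    assume "(a, b) \<in> path_edges (x # y # zs)"
    then obtain i where i: "Suc i < length (x # y # zs)" "a = (x # y # zs) ! i" "b = (x # y # zs) ! Suc i"
      unfolding path_edges_nth by blast
    show "(a, b) \<in> insert (x, y) (path_edges (y # zs))"
    proof (cases i)
      case 0 then show ?thesis using i by simp
    next
      case (Suc k)
      have "(a, b) \<in> path_edges (y # zs)" unfolding path_edges_nth using i Suc
        by (intro exI[of _ k]) auto
      then show ?thesis by simp
    qed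
  next
    assume "(a, b) \<in> insert (x, y) (path_edges (y # zs))"
    then consider "(a, b) = (x, y)" | "(a, b) \<in> path_edges (y # zs)" by blast
    then show "(a, b) \<in> path_edges (x # y # zs)"
    proof cases
      case 1 then show ?thesis unfolding path_edges_nth by (intro exI[of _ 0]) auto
    next
      case 2
      then obtain i where i: "Suc i < length (y # zs)" "a = (y # zs) ! i" "b = (y # zs) ! Suc i"
        unfolding path_edges_nth by blast
      then show ?thesis unfolding path_edges_nth by (intro exI[of _ "Suc i"]) auto
    qed
  qed
qed

lemma path_edges_Cons: "path_edges (x # xs) = (if xs = [] then {} else insert (x, hd xs) (path_edges xs))"
  by (cases xs) auto

lemma path_edges_append:
  "path_edges (xs @ ys) = path_edges xs \<union> path_edges ys \<union> (if xs \<noteq> [] \<and> ys \<noteq> [] then {(last xs, hd ys)} else {})"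
  by (induction xs rule: induct_list012) (auto simp: path_edges_Cons)

lemma path_edges_join:
  assumes "xs \<noteq> []" "ys \<noteq> []" "last xs = hd ys"
  shows "path_edges (xs @ tl ys) = path_edges xs \<union> path_edges ys"
proof -
  have ys: "ys = hd ys # tl ys" using assms by simp
  show ?thesis
    using assms
    by (subst (2) ys, simp only: path_edges_append path_edges_Cons) auto
qed

lemma set_join:
  assumes "xs \<noteq> []" "ys \<noteq> []" "last xs = hd ys"
  shows "set (xs @ tl ys) = set xs \<union> set ys"
proof -
  have ys: "ys = hd ys # tl ys" using assms by simp
  have "set ys = insert (hd ys) (set (tl ys))" using ys by (metis list.simps(15))
  then show ?thesis using last_in_set[OF assms(1)] assms(3) by auto
qed

lemma path_edges_subset: "(a, b) \<in> path_edges xs \<Longrightarrow> a \<in> set xs \<and> b \<in> set xs"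
  by (induction xs rule: induct_list012) auto

lemma successively_path_edges: "successively (\<lambda>x y. (x, y) \<in> path_edges xs) xs"
  unfolding successively_conv_nth path_edges_def by auto

lemma dpath_path_edges_subset: "is_dpath E xs u v \<Longrightarrow> path_edges xs \<subseteq> E"
  unfolding is_dpath_def path_edges_def by auto

lemma dpath_trancl:
  assumes "is_dpath E xs u v" "i < j" "j < length xs"
  shows "(xs ! i, xs ! j) \<in> E\<^sup>+"
  using assms(2,3)
proof (induction j)
  case 0 then show ?case by simp
next
  case (Suc j)
  have e: "(xs ! j, xs ! Suc j) \<in> E" using assms(1) Suc.prems unfolding is_dpath_def by auto
  show ?case
  proof (cases "i = j")
    case True then show ?thesis using e by auto
  next
    case False
    then have "(xs ! i, xs ! j) \<in> E\<^sup>+" using Suc by auto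
    then show ?thesis using e by auto
  qed
qed

lemma dpath_rtrancl:
  assumes "is_dpath E xs u v" "i \<le> j" "j < length xs"
  shows "(xs ! i, xs ! j) \<in> E\<^sup>*"
  using dpath_trancl[OF assms(1)] assms(2,3)
  by (metis le_neq_implies_less rtrancl.rtrancl_refl trancl_into_rtrancl)

lemma dpath_reach: "is_dpath E xs u v \<Longrightarrow> reach E u v"
proof -
  assume a: "is_dpath E xs u v"
  then have "xs \<noteq> []" "hd xs = u" "last xs = v" by (auto simp: is_dpath_def)
  then have "u = xs ! 0" "v = xs ! (length xs - 1)" by (auto simp: hd_conv_nth last_conv_nth)
  then show ?thesis using dpath_rtrancl[OF a, of 0 "length xs - 1"] \<open>xs \<noteq> []\<close>
    by (auto simp: reach_def)
qed

lemma dpath_snoc: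
  assumes "is_dpath E xs u v" "(v, w) \<in> E"
  shows "is_dpath E (xs @ [w]) u w"
  using assms unfolding is_dpath_succ by (auto simp: successively_append_iff)

lemma dpath_Cons:
  assumes "is_dpath E xs v w" "(u, v) \<in> E"
  shows "is_dpath E (u # xs) u w"
  using assms unfolding is_dpath_succ by (auto simp: successively_Cons)

lemma dpath_single[simp]: "is_dpath E [u] a b \<longleftrightarrow> a = u \<and> b = u"
  unfolding is_dpath_def by auto

lemma reach_path: "reach E u v \<Longrightarrow> \<exists>xs. is_dpath E xs u v"
  unfolding reach_def
proof (induction rule: rtrancl_induct)
  case base then show ?case by (rule exI[of _ "[u]"]) simp
next
  case (step y z)
  then obtain xs where "is_dpath E xs u y" by blast
  then have "is_dpath E (xs @ [z]) u z" using dpath_snoc step(2) by metis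
  then show ?case by blast
qed

lemma reach_iff_path: "reach E u v \<longleftrightarrow> (\<exists>xs. is_dpath E xs u v)"
  using reach_path dpath_reach by metis

lemma dpath_distinct:
  assumes "acyc E" "is_dpath E xs u v"
  shows "distinct xs"
proof (rule ccontr)
  assume "\<not> distinct xs"
  then obtain i j where "i < j" "j < length xs" "xs ! i = xs ! j"
    by (metis distinct_conv_nth linorder_neqE_nat)
  then show False using dpath_trancl[OF assms(2)] assms(1) unfolding acyc_def by metis
qed

lemma dpath_concat:
  assumes "is_dpath E xs u w" "is_dpath E ys w v"
  shows "is_dpath E (xs @ tl ys) u v"
proof -
  obtain zs where ys: "ys = w # zs" using assms(2) unfolding is_dpath_def by (cases ys) auto
  have s1: "successively (\<lambda>x y. (x,y) \<in> E) xs" "successively (\<lambda>x y. (x,y) \<in> E) (w # zs)"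
    using assms ys unfolding is_dpath_succ by auto
  have x: "xs \<noteq> []" "last xs = w" "hd xs = u" using assms(1) unfolding is_dpath_def by auto
  have "successively (\<lambda>x y. (x,y) \<in> E) (xs @ zs)"
    using s1 x by (auto simp: successively_append_iff successively_Cons)
  moreover have "last (xs @ zs) = v"
    using assms(2) x ys unfolding is_dpath_def by (cases zs) auto
  ultimately show ?thesis using x ys unfolding is_dpath_succ by auto
qed

lemma dpath_take:
  assumes "is_dpath E xs u v" "i < length xs"
  shows "is_dpath E (take (Suc i) xs) u (xs ! i)"
  using assms unfolding is_dpath_def
  apply (intro conjI)
     apply (cases xs; simp)
    apply (cases xs; simp)
   apply (simp add: take_Suc_conv_app_nth)
  apply auto
  done

lemma dpath_drop:
  assumes "is_dpath E xs u v" "i < length xs"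
  shows "is_dpath E (drop i xs) (xs ! i) v"
  using assms unfolding is_dpath_def
  by (auto simp: hd_drop_conv_nth)

lemma take_drop_join:
  assumes "i < length xs"
  shows "xs = take (Suc i) xs @ tl (drop i xs)"
  using assms by (metis Cons_nth_drop_Suc append_take_drop_id list.sel(3) take_Suc_conv_app_nth append.assoc append_Cons append_Nil)

lemma reach_antisym:
  assumes "acyc E" "reach E x y" "reach E y x" shows "x = y"
  using assms unfolding acyc_def reach_def
  by (metis rtrancl_eq_or_trancl rtrancl_trancl_trancl)

lemma reach_trans: "reach E x y \<Longrightarrow> reach E y z \<Longrightarrow> reach E x z"
  unfolding reach_def by auto

lemma reach_mem:
  assumes "is_dpath E xs a b" "w \<in> set xs"
  shows "reach E a w \<and> reach E w b"
proof -
  obtain i where i: "i < length xs" "xs ! i = w" using assms(2) by (metis in_set_conv_nth)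
  show ?thesis using dpath_take[OF assms(1) i(1)] dpath_drop[OF assms(1) i(1)] i(2) dpath_reach by metis
qed

lemma dpath_loop:
  assumes "acyc E" "is_dpath E xs u u" shows "xs = [u]"
proof -
  have d: "distinct xs" using dpath_distinct assms by metis
  have "xs \<noteq> []" "hd xs = u" "last xs = u" using assms unfolding is_dpath_def by auto
  then show ?thesis using d
    by (metis distinct.simps(2) hd_Cons_tl last.simps last_in_set)
qed

lemma edge_reach: "(x, y) \<in> E \<Longrightarrow> reach E x y"
  unfolding reach_def by auto

lemma acyc_edge_neq: "acyc E \<Longrightarrow> (x, y) \<in> E \<Longrightarrow> x \<noteq> y"
  unfolding acyc_def by auto

lemma acyc_edge_reach: "acyc E \<Longrightarrow> (x, y) \<in> E \<Longrightarrow> reach E y x \<Longrightarrow> False"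
  unfolding acyc_def reach_def by (meson rtrancl_into_trancl2)


section \<open>Cuts, uniqueness and the BP decomposition\<close>

lemma path_split:
  assumes "is_dpath E xs a b" "w \<in> set xs"
  obtains p q where "is_dpath E p a w" "is_dpath E q w b" "xs = p @ tl q"
proof -
  obtain i where i: "i < length xs" "xs ! i = w" using assms(2) by (metis in_set_conv_nth)
  show ?thesis using that dpath_take[OF assms(1) i(1)] dpath_drop[OF assms(1) i(1)] take_drop_join[OF i(1)] i(2)
    by metis
qed

lemma dpath_ne: "is_dpath E xs a b \<Longrightarrow> xs \<noteq> [] \<and> hd xs = a \<and> last xs = b"
  unfolding is_dpath_def by auto

lemma set_join_dpath: "is_dpath E p a w \<Longrightarrow> is_dpath E q w b \<Longrightarrow> set (p @ tl q) = set p \<union> set q"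
  using set_join dpath_ne by metis

lemma pe_join_dpath: "is_dpath E p a w \<Longrightarrow> is_dpath E q w b \<Longrightarrow> path_edges (p @ tl q) = path_edges p \<union> path_edges q"
  using path_edges_join dpath_ne by metis

lemma paths_V_iff: "x \<in> paths_V E u v \<longleftrightarrow> (\<exists>xs. is_dpath E xs u v \<and> x \<in> set xs)"
  unfolding paths_V_def by auto

lemma paths_E_iff: "e \<in> paths_E E u v \<longleftrightarrow> (\<exists>xs. is_dpath E xs u v \<and> e \<in> path_edges xs)"
  unfolding paths_E_def by auto

definition cut :: "('a \<times> 'a) set \<Rightarrow> 'a \<Rightarrow> 'a \<Rightarrow> 'a \<Rightarrow> bool" where
  "cut E a w b \<longleftrightarrow> reach E a w \<and> reach E w b \<and> (\<forall>xs. is_dpath E xs a b \<longrightarrow> w \<in> set xs)"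

definition uniq :: "('a \<times> 'a) set \<Rightarrow> 'a \<Rightarrow> 'a \<Rightarrow> bool" where
  "uniq E a b \<longleftrightarrow> (\<exists>!xs. is_dpath E xs a b)"

lemma cut_split:
  assumes "cut E a w b"
  shows "paths_V E a b = paths_V E a w \<union> paths_V E w b \<and> paths_E E a b = paths_E E a w \<union> paths_E E w b"
proof -
  have c: "reach E a w" "reach E w b" "\<And>xs. is_dpath E xs a b \<Longrightarrow> w \<in> set xs" using assms unfolding cut_def by auto
  obtain p0 where p0: "is_dpath E p0 a w" using c(1) reach_path by metis
  obtain q0 where q0: "is_dpath E q0 w b" using c(2) reach_path by metis
  have V: "paths_V E a b = paths_V E a w \<union> paths_V E w b"
  proof (rule set_eqI)
    fix x
    show "x \<in> paths_V E a b \<longleftrightarrow> x \<in> paths_V E a w \<union> paths_V E w b"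
    proof
      assume "x \<in> paths_V E a b"
      then obtain xs where xs: "is_dpath E xs a b" "x \<in> set xs" unfolding paths_V_iff by blast
      obtain p q where pq: "is_dpath E p a w" "is_dpath E q w b" "xs = p @ tl q" using path_split[OF xs(1) c(3)[OF xs(1)]] by metis
      then show "x \<in> paths_V E a w \<union> paths_V E w b" using xs(2) set_join_dpath[OF pq(1,2)] unfolding Un_iff paths_V_iff by auto
    next
      assume "x \<in> paths_V E a w \<union> paths_V E w b"
      then consider xs where "is_dpath E xs a w" "x \<in> set xs" | xs where "is_dpath E xs w b" "x \<in> set xs"
        unfolding Un_iff paths_V_iff by blast
      then show "x \<in> paths_V E a b"
      proof cases
        case 1
        then have "is_dpath E (xs @ tl q0) a b" "x \<in> set (xs @ tl q0)" using dpath_concat[OF 1(1) q0] set_join_dpath[OF 1(1) q0] by auto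
        then show ?thesis unfolding paths_V_iff by blast
      next
        case 2
        then have "is_dpath E (p0 @ tl xs) a b" "x \<in> set (p0 @ tl xs)" using dpath_concat[OF p0 2(1)] set_join_dpath[OF p0 2(1)] by auto
        then show ?thesis unfolding paths_V_iff by blast
      qed
    qed
  qed
  have Ed: "paths_E E a b = paths_E E a w \<union> paths_E E w b"
  proof (rule set_eqI)
    fix x
    show "x \<in> paths_E E a b \<longleftrightarrow> x \<in> paths_E E a w \<union> paths_E E w b"
    proof
      assume "x \<in> paths_E E a b"
      then obtain xs where xs: "is_dpath E xs a b" "x \<in> path_edges xs" unfolding paths_E_iff by blast
      obtain p q where pq: "is_dpath E p a w" "is_dpath E q w b" "xs = p @ tl q" using path_split[OF xs(1) c(3)[OF xs(1)]] by metis
      then show "x \<in> paths_E E a w \<union> paths_E E w b" using xs(2) pe_join_dpath[OF pq(1,2)] unfolding Un_iff paths_E_iff by auto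
    next
      assume "x \<in> paths_E E a w \<union> paths_E E w b"
      then consider xs where "is_dpath E xs a w" "x \<in> path_edges xs" | xs where "is_dpath E xs w b" "x \<in> path_edges xs"
        unfolding Un_iff paths_E_iff by blast
      then show "x \<in> paths_E E a b"
      proof cases
        case 1
        then have "is_dpath E (xs @ tl q0) a b" "x \<in> path_edges (xs @ tl q0)" using dpath_concat[OF 1(1) q0] pe_join_dpath[OF 1(1) q0] by auto
        then show ?thesis unfolding paths_E_iff by blast
      next
        case 2
        then have "is_dpath E (p0 @ tl xs) a b" "x \<in> path_edges (p0 @ tl xs)" using dpath_concat[OF p0 2(1)] pe_join_dpath[OF p0 2(1)] by auto
        then show ?thesis unfolding paths_E_iff by blast
      qed
    qed
  qed
  show ?thesis using V Ed by blast
qed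

lemma cut_left:
  assumes "acyc E" "cut E a w b" "reach E a x" "reach E x w"
  shows "cut E x w b"
  unfolding cut_def
proof (intro conjI allI impI)
  show "reach E x w" by fact
  show "reach E w b" using assms(2) unfolding cut_def by auto
  fix xs assume xs: "is_dpath E xs x b"
  obtain ys where ys: "is_dpath E ys a x" using assms(3) reach_path by metis
  have "w \<in> set (ys @ tl xs)" using assms(2) dpath_concat[OF ys xs] unfolding cut_def by auto
  then have "w \<in> set ys \<or> w \<in> set xs" using set_join_dpath[OF ys xs] by auto
  then show "w \<in> set xs"
  proof
    assume "w \<in> set ys"
    then have "reach E w x" using reach_mem[OF ys] by auto
    then have "w = x" using reach_antisym[OF assms(1)] assms(4) by auto
    then show ?thesis using xs dpath_ne by (metis list.set_sel(1))
  qed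
qed

lemma cut_right:
  assumes "acyc E" "cut E a w b" "reach E w x" "reach E x b"
  shows "cut E a w x"
  unfolding cut_def
proof (intro conjI allI impI)
  show "reach E w x" by fact
  show "reach E a w" using assms(2) unfolding cut_def by auto
  fix xs assume xs: "is_dpath E xs a x"
  obtain ys where ys: "is_dpath E ys x b" using assms(4) reach_path by metis
  have "w \<in> set (xs @ tl ys)" using assms(2) dpath_concat[OF xs ys] unfolding cut_def by auto
  then have "w \<in> set xs \<or> w \<in> set ys" using set_join_dpath[OF xs ys] by auto
  then show "w \<in> set xs"
  proof (rule disjE)
    assume "w \<in> set ys"
    then have "reach E x w" using reach_mem[OF ys] by auto
    then have "w = x" using reach_antisym[OF assms(1)] assms(3) by auto
    then show ?thesis using xs dpath_ne by (metis last_in_set)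
  qed simp
qed

lemma cut_trans1:
  assumes "cut E a c w" "cut E a w b"
  shows "cut E a c b"
  unfolding cut_def
proof (intro conjI allI impI)
  show "reach E a c" using assms unfolding cut_def by auto
  show "reach E c b" using assms unfolding cut_def using reach_trans by metis
  fix xs assume xs: "is_dpath E xs a b"
  then have "w \<in> set xs" using assms(2) unfolding cut_def by auto
  then obtain p q where pq: "is_dpath E p a w" "is_dpath E q w b" "xs = p @ tl q" using path_split[OF xs] by metis
  then have "c \<in> set p" using assms(1) unfolding cut_def by auto
  then show "c \<in> set xs" using pq by simp
qed

lemma cut_trans2:
  assumes "cut E a w b" "cut E w c b"
  shows "cut E a c b"
  unfolding cut_def
proof (intro conjI allI impI)
  show "reach E a c" using assms unfolding cut_def using reach_trans by metis
  show "reach E c b" using assms unfolding cut_def by auto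
  fix xs assume xs: "is_dpath E xs a b"
  then have "w \<in> set xs" using assms(1) unfolding cut_def by auto
  then obtain p q where pq: "is_dpath E p a w" "is_dpath E q w b" "xs = p @ tl q" using path_split[OF xs] by metis
  then have "c \<in> set q" using assms(2) unfolding cut_def by auto
  then show "c \<in> set xs" using set_join_dpath[OF pq(1,2)] pq(3) by auto
qed

lemma cut_refl: "reach E a b \<Longrightarrow> cut E a a b"
  unfolding cut_def reach_def by (auto dest: dpath_ne)

lemma uniq_join:
  assumes "uniq E a w" "uniq E w b" "cut E a w b"
  shows "uniq E a b"
proof -
  obtain p where p: "is_dpath E p a w" "\<And>p'. is_dpath E p' a w \<Longrightarrow> p' = p" using assms(1) unfolding uniq_def by metis
  obtain q where q: "is_dpath E q w b" "\<And>q'. is_dpath E q' w b \<Longrightarrow> q' = q" using assms(2) unfolding uniq_def by metis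
  show ?thesis unfolding uniq_def
  proof (rule ex1I[of _ "p @ tl q"])
    show "is_dpath E (p @ tl q) a b" using dpath_concat p q by metis
    fix xs assume xs: "is_dpath E xs a b"
    then have "w \<in> set xs" using assms(3) unfolding cut_def by auto
    then obtain p' q' where pq: "is_dpath E p' a w" "is_dpath E q' w b" "xs = p' @ tl q'" using path_split[OF xs] by metis
    then show "xs = p @ tl q" using p q by metis
  qed
qed

lemma uniq_refl: "acyc E \<Longrightarrow> uniq E a a"
  unfolding uniq_def using dpath_loop by (metis dpath_single)

inductive BP :: "'a set \<Rightarrow> ('a \<times> 'a) set \<Rightarrow> 'a \<Rightarrow> 'a \<Rightarrow> bool" for V E where
  BP_uniq: "uniq E x y \<Longrightarrow> BP V E x y"
| BP_step: "uniq E x s \<Longrightarrow> is_sbp V E s t \<Longrightarrow> BP V E t y \<Longrightarrow> cut E x s y \<Longrightarrow> cut E s t y \<Longrightarrow> BP V E x y"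

lemma cut_reach: "cut E a w b \<Longrightarrow> reach E a w \<and> reach E w b"
  unfolding cut_def by auto

lemma BP_comp:
  assumes "BP V E x w" "acyc E" "BP V E w y" "cut E x w y"
  shows "BP V E x y"
  using assms(1,3,4)
proof (induction arbitrary: y rule: BP.induct)
  case (BP_uniq x w)
  note H = BP_uniq.hyps BP_uniq.prems
  from H(2) show ?case
  proof (cases rule: BP.cases)
    case BP_uniq
    then show ?thesis using uniq_join H BP.BP_uniq by metis
  next
    case (BP_step s t)
    have c1: "cut E x w s" using cut_right[OF assms(2) H(3)] BP_step cut_reach reach_trans by metis
    have u: "uniq E x s" using uniq_join[OF H(1) BP_step(1) c1] .
    have c2: "cut E x s y" using cut_trans2[OF H(3) BP_step(4)] .
    show ?thesis using BP.BP_step[OF u BP_step(2) BP_step(3) c2 BP_step(5)] .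
  qed
next
  case (BP_step x s t w)
  have rxt: "reach E x t" using BP_step.hyps(4,5) cut_reach reach_trans by metis
  have rtw: "reach E t w" using BP_step.hyps(5) cut_reach by metis
  have c1: "cut E t w y" using cut_left[OF assms(2) BP_step.prems(2) rxt rtw] .
  have bp: "BP V E t y" using BP_step.IH[OF BP_step.prems(1) c1] .
  have c2: "cut E x s y" using cut_trans1[OF BP_step.hyps(4) BP_step.prems(2)] .
  have rsw: "reach E s w" using BP_step.hyps(4) cut_reach by metis
  have rxs: "reach E x s" using BP_step.hyps(4) cut_reach by metis
  have c3: "cut E s w y" using cut_left[OF assms(2) BP_step.prems(2) rxs rsw] .
  have c4: "cut E s t y" using cut_trans1[OF BP_step.hyps(5) c3] .
  show ?case using BP.BP_step[OF BP_step.hyps(1,2) bp c2 c4] .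
qed

lemma card_parents_ne: "card (parents E t) = 2 \<Longrightarrow> \<exists>p. (p, t) \<in> E"
proof (rule ccontr)
  assume "card (parents E t) = 2" "\<nexists>p. (p, t) \<in> E"
  then have "parents E t = {}" unfolding parents_def by auto
  then show False using \<open>card (parents E t) = 2\<close> by simp
qed

lemma sbp_paths:
  assumes "acyc E" "is_sbp V E s t"
  shows "paths_V E s t = sbp_V E s t \<and> paths_E E s t = sbp_E E s t"
proof -
  have par: "\<And>p. p \<in> parents E t \<Longrightarrow> reach E s p" using assms(2) unfolding is_sbp_def is_lca_def by blast
  have "is_sink E t" using assms(2) unfolding is_sbp_def by blast
  then have "card (parents E t) = 2" unfolding is_sink_def .
  from card_parents_ne[OF this] obtain p0 where p0: "(p0, t) \<in> E" ..
  have p0p: "p0 \<in> parents E t" using p0 unfolding parents_def by simp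
  have rst: "reach E s t" using reach_trans[OF par[OF p0p] edge_reach[OF p0]] .
  have snt: "s \<noteq> t" using par[OF p0p] p0 acyc_edge_reach[OF assms(1)] by metis
  have dec: "\<exists>p zs. (p, t) \<in> E \<and> is_dpath E zs s p \<and> xs = zs @ [t]" if xs: "is_dpath E xs s t" for xs
  proof -
    have ne: "xs \<noteq> []" "hd xs = s" "last xs = t" using xs dpath_ne by metis+
    have "length xs \<noteq> 1"
    proof
      assume "length xs = 1"
      then obtain a where "xs = [a]" by (cases xs) auto
      then show False using ne snt by simp
    qed
    moreover have "length xs > 0" using ne(1) by simp
    ultimately have l2: "length xs \<ge> 2" by linarith
    define i where "i = length xs - 2"
    have i: "i < length xs" "Suc i < length xs" using l2 i_def by auto
    have e: "(xs ! i, xs ! Suc i) \<in> E" using xs i unfolding is_dpath_def by auto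
    have si: "Suc i = length xs - 1" using l2 i_def by arith
    have "xs ! Suc i = t" using ne unfolding si by (simp add: last_conv_nth)
    moreover have "take (Suc (Suc i)) xs = take (Suc i) xs @ [xs ! Suc i]" using i(2) by (rule take_Suc_conv_app_nth)
    moreover have "Suc (Suc i) = length xs" using l2 i_def by simp
    ultimately have "take (Suc i) xs @ [t] = xs" by simp
    moreover have "is_dpath E (take (Suc i) xs) s (xs ! i)" using dpath_take[OF xs i(1)] .
    moreover have "(xs ! i, t) \<in> E" using e \<open>xs ! Suc i = t\<close> by simp
    ultimately show ?thesis by (intro exI[of _ "xs ! i"] exI[of _ "take (Suc i) xs"]) simp
  qed
  have V: "paths_V E s t = sbp_V E s t"
  proof (rule set_eqI)
    fix x
    show "x \<in> paths_V E s t \<longleftrightarrow> x \<in> sbp_V E s t"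
    proof
      assume "x \<in> paths_V E s t"
      then obtain xs where xs: "is_dpath E xs s t" "x \<in> set xs" unfolding paths_V_iff by blast
      obtain p zs where pz: "(p, t) \<in> E" "is_dpath E zs s p" "xs = zs @ [t]" using dec[OF xs(1)] by blast
      then have "x = t \<or> x \<in> paths_V E s p" using xs(2) unfolding paths_V_iff by auto
      then show "x \<in> sbp_V E s t" using pz(1) unfolding sbp_V_def parents_def by blast
    next
      assume "x \<in> sbp_V E s t"
      then consider "x = t" | p where "(p, t) \<in> E" "x \<in> paths_V E s p" unfolding sbp_V_def parents_def by blast
      then show "x \<in> paths_V E s t"
      proof cases
        case 1
        obtain xs where xs: "is_dpath E xs s t" using reach_path[OF rst] by blast
        then have "t \<in> set xs" using dpath_ne[OF xs] last_in_set by metis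
        then show ?thesis using xs 1 unfolding paths_V_iff by blast
      next
        case 2
        then obtain zs where "is_dpath E zs s p" "x \<in> set zs" unfolding paths_V_iff by blast
        then have "is_dpath E (zs @ [t]) s t" "x \<in> set (zs @ [t])" using dpath_snoc[OF _ 2(1)] by auto
        then show ?thesis unfolding paths_V_iff by blast
      qed
    qed
  qed
  have Ed: "paths_E E s t = sbp_E E s t"
  proof (rule set_eqI)
    fix x
    show "x \<in> paths_E E s t \<longleftrightarrow> x \<in> sbp_E E s t"
    proof
      assume "x \<in> paths_E E s t"
      then obtain xs where xs: "is_dpath E xs s t" "x \<in> path_edges xs" unfolding paths_E_iff by blast
      obtain p zs where pz: "(p, t) \<in> E" "is_dpath E zs s p" "xs = zs @ [t]" using dec[OF xs(1)] by blast
      have "path_edges xs = insert (p, t) (path_edges zs)" using pz dpath_ne[OF pz(2)]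
        by (simp add: path_edges_append)
      then have "x = (p, t) \<or> x \<in> paths_E E s p" using xs(2) pz(2) unfolding paths_E_iff by auto
      then show "x \<in> sbp_E E s t" using pz(1) unfolding sbp_E_def parents_def by blast
    next
      assume "x \<in> sbp_E E s t"
      then obtain p where p: "(p, t) \<in> E" "x = (p, t) \<or> x \<in> paths_E E s p" unfolding sbp_E_def parents_def by blast
      have pp: "p \<in> parents E t" using p(1) unfolding parents_def by simp
      obtain zs where zs: "is_dpath E zs s p" "x = (p, t) \<or> x \<in> path_edges zs"
      proof (cases "x = (p, t)")
        case True
        obtain zs where "is_dpath E zs s p" using reach_path[OF par[OF pp]] by blast
        then show ?thesis using that True by blast
      next
        case False
        then obtain zs where "is_dpath E zs s p" "x \<in> path_edges zs" using p(2) unfolding paths_E_iff by blast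
        then show ?thesis using that by blast
      qed
      have "path_edges (zs @ [t]) = insert (p, t) (path_edges zs)" using dpath_ne[OF zs(1)]
        by (simp add: path_edges_append)
      then show "x \<in> paths_E E s t" using dpath_snoc[OF zs(1) p(1)] zs(2) unfolding paths_E_iff by blast
    qed
  qed
  show ?thesis using V Ed by blast
qed

lemma UN_ins_Suc: "(\<Union>j\<in>insert c (Suc ` A). f j) = f c \<union> (\<Union>k\<in>A. f (Suc k))" by auto

definition Dec :: "'a set \<Rightarrow> ('a \<times> 'a) set \<Rightarrow> 'a \<Rightarrow> 'a \<Rightarrow> bool" where
  "Dec V E u v \<longleftrightarrow> (\<exists>(m::nat) (s::nat \<Rightarrow> 'a) (t::nat \<Rightarrow> 'a).
     let a = (\<lambda>j. if j = 0 then u else t j);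
         b = (\<lambda>j. if j = m then v else s (Suc j))
     in (\<forall>j \<in> {1..m}. is_sbp V E (s j) (t j)) \<and>
        (\<forall>j \<in> {0..m}. \<exists>!xs. is_dpath E xs (a j) (b j)) \<and>
        paths_V E u v = (\<Union>j \<in> {0..m}. paths_V E (a j) (b j)) \<union> (\<Union>j \<in> {1..m}. sbp_V E (s j) (t j)) \<and>
        paths_E E u v = (\<Union>j \<in> {0..m}. paths_E E (a j) (b j)) \<union> (\<Union>j \<in> {1..m}. sbp_E E (s j) (t j)))"

lemma BP_Dec:
  assumes "BP V E x y" "acyc E"
  shows "Dec V E x y"
  using assms(1)
proof (induction rule: BP.induct)
  case (BP_uniq x y)
  then show ?case unfolding Dec_def Let_def uniq_def by (intro exI[of _ 0]) auto
next
  case (BP_step x s t y)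
  obtain m s' t' where H:
    "let a = (\<lambda>j. if j = 0 then t else t' j);
         b = (\<lambda>j. if j = m then y else s' (Suc j))
     in (\<forall>j \<in> {1..m}. is_sbp V E (s' j) (t' j)) \<and>
        (\<forall>j \<in> {0..m}. \<exists>!xs. is_dpath E xs (a j) (b j)) \<and>
        paths_V E t y = (\<Union>j \<in> {0..m}. paths_V E (a j) (b j)) \<union> (\<Union>j \<in> {1..m}. sbp_V E (s' j) (t' j)) \<and>
        paths_E E t y = (\<Union>j \<in> {0..m}. paths_E E (a j) (b j)) \<union> (\<Union>j \<in> {1..m}. sbp_E E (s' j) (t' j))"
    using BP_step.IH unfolding Dec_def by blast
  define a' where "a' = (\<lambda>j. if j = 0 then t else t' j)"
  define b' where "b' = (\<lambda>j. if j = m then y else s' (Suc j))"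
  have H1: "\<forall>j \<in> {1..m}. is_sbp V E (s' j) (t' j)"
    and H2: "\<forall>j \<in> {0..m}. \<exists>!xs. is_dpath E xs (a' j) (b' j)"
    and H3: "paths_V E t y = (\<Union>j \<in> {0..m}. paths_V E (a' j) (b' j)) \<union> (\<Union>j \<in> {1..m}. sbp_V E (s' j) (t' j))"
    and H4: "paths_E E t y = (\<Union>j \<in> {0..m}. paths_E E (a' j) (b' j)) \<union> (\<Union>j \<in> {1..m}. sbp_E E (s' j) (t' j))"
    using H unfolding a'_def b'_def Let_def by auto
  define s2 where "s2 = (\<lambda>j. if j = 1 then s else s' (j - 1))"
  define t2 where "t2 = (\<lambda>j. if j = 1 then t else t' (j - 1))"
  define a2 where "a2 = (\<lambda>j. if j = 0 then x else t2 j)"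
  define b2 where "b2 = (\<lambda>j. if j = Suc m then y else s2 (Suc j))"
  have a2S: "a2 (Suc j) = a' j" for j unfolding a2_def t2_def a'_def by auto
  have b2S: "b2 (Suc j) = b' j" for j unfolding b2_def s2_def b'_def by auto
  have a20: "a2 0 = x" and b20: "b2 0 = s" unfolding a2_def b2_def s2_def by auto
  have s2S: "s2 (Suc j) = s' j" if "j \<ge> 1" for j using that unfolding s2_def by auto
  have t2S: "t2 (Suc j) = t' j" if "j \<ge> 1" for j using that unfolding t2_def by auto
  have I0: "{0..Suc m} = insert 0 (Suc ` {0..m})" by (auto simp: image_iff)
  have I1: "{1..Suc m} = insert 1 (Suc ` {1..m})"
  proof (rule set_eqI)
    fix z show "z \<in> {1..Suc m} \<longleftrightarrow> z \<in> insert 1 (Suc ` {1..m})"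
      by (cases z) (auto simp: image_iff)
  qed
  have cV: "paths_V E x y = paths_V E x s \<union> sbp_V E s t \<union> paths_V E t y"
    and cE: "paths_E E x y = paths_E E x s \<union> sbp_E E s t \<union> paths_E E t y"
    using cut_split[OF BP_step.hyps(4)] cut_split[OF BP_step.hyps(5)] sbp_paths[OF assms(2) BP_step.hyps(2)] by auto
  have G1: "\<forall>j \<in> {1..Suc m}. is_sbp V E (s2 j) (t2 j)"
  proof
    fix j assume "j \<in> {1..Suc m}"
    then have "j = 1 \<or> (\<exists>k \<in> {1..m}. j = Suc k)" by (cases j) auto
    then show "is_sbp V E (s2 j) (t2 j)"
    proof
      assume "j = 1" then show ?thesis using BP_step.hyps(2) unfolding s2_def t2_def by simp
    next
      assume "\<exists>k \<in> {1..m}. j = Suc k"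
      then obtain k where "k \<in> {1..m}" "j = Suc k" by blast
      then show ?thesis using H1 s2S[of k] t2S[of k] by simp
    qed
  qed
  have G2: "\<forall>j \<in> {0..Suc m}. \<exists>!xs. is_dpath E xs (a2 j) (b2 j)"
  proof
    fix j assume j: "j \<in> {0..Suc m}"
    show "\<exists>!xs. is_dpath E xs (a2 j) (b2 j)"
    proof (cases j)
      case 0 then show ?thesis using BP_step.hyps(1) unfolding uniq_def by (simp add: a20 b20)
    next
      case (Suc k)
      then have "k \<in> {0..m}" using j by auto
      then show ?thesis using H2 Suc by (simp add: a2S b2S)
    qed
  qed
  have U1: "(\<Union>j \<in> {0..Suc m}. paths_V E (a2 j) (b2 j)) = paths_V E x s \<union> (\<Union>j \<in> {0..m}. paths_V E (a' j) (b' j))"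
    unfolding I0 UN_ins_Suc a2S b2S a20 b20 ..
  have U2: "(\<Union>j \<in> {0..Suc m}. paths_E E (a2 j) (b2 j)) = paths_E E x s \<union> (\<Union>j \<in> {0..m}. paths_E E (a' j) (b' j))"
    unfolding I0 UN_ins_Suc a2S b2S a20 b20 ..
  have U3: "(\<Union>j \<in> {1..Suc m}. sbp_V E (s2 j) (t2 j)) = sbp_V E s t \<union> (\<Union>j \<in> {1..m}. sbp_V E (s' j) (t' j))"
    unfolding I1 UN_ins_Suc using s2S t2S by (auto simp: s2_def t2_def)
  have U4: "(\<Union>j \<in> {1..Suc m}. sbp_E E (s2 j) (t2 j)) = sbp_E E s t \<union> (\<Union>j \<in> {1..m}. sbp_E E (s' j) (t' j))"
    unfolding I1 UN_ins_Suc using s2S t2S by (auto simp: s2_def t2_def)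
  have G3: "paths_V E x y = (\<Union>j \<in> {0..Suc m}. paths_V E (a2 j) (b2 j)) \<union> (\<Union>j \<in> {1..Suc m}. sbp_V E (s2 j) (t2 j))"
    unfolding U1 U3 cV H3 by blast
  have G4: "paths_E E x y = (\<Union>j \<in> {0..Suc m}. paths_E E (a2 j) (b2 j)) \<union> (\<Union>j \<in> {1..Suc m}. sbp_E E (s2 j) (t2 j))"
    unfolding U2 U4 cE H4 by blast
  show ?case unfolding Dec_def Let_def
    apply (rule exI[of _ "Suc m"], rule exI[of _ s2], rule exI[of _ t2])
    using G1 G2 G3 G4 unfolding a2_def b2_def by blast
qed

definition adj :: "('a \<times> 'a) set \<Rightarrow> 'a \<Rightarrow> 'a \<Rightarrow> bool" where
  "adj F x y \<longleftrightarrow> (x, y) \<in> F \<or> (y, x) \<in> F"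

definition cyc :: "('a \<times> 'a) set \<Rightarrow> 'a list \<Rightarrow> bool" where
  "cyc F cs \<longleftrightarrow> (\<forall>i < length cs. adj F (cs ! i) (cs ! (Suc i mod length cs)))"

definition ES :: "'a list \<Rightarrow> 'a set set" where
  "ES cs = {{cs ! i, cs ! (Suc i mod length cs)} | i. i < length cs}"

lemma adj_sym: "adj F x y \<longleftrightarrow> adj F y x" by (auto simp: adj_def)

lemma adj_sym_fun: "(\<lambda>x y. adj F y x) = adj F" by (auto simp: adj_def fun_eq_iff)

lemma adj_mono: "F \<subseteq> G \<Longrightarrow> adj F x y \<Longrightarrow> adj G x y" by (auto simp: adj_def)

lemma uwalk_rev: "successively (adj F) (rev xs) \<longleftrightarrow> successively (adj F) xs"
  unfolding successively_rev adj_sym_fun ..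

lemma uwalk_mono: "F \<subseteq> G \<Longrightarrow> successively (adj F) xs \<Longrightarrow> successively (adj G) xs"
  using successively_mono adj_mono by metis

lemma uwalk_join:
  assumes "successively (adj F) xs" "successively (adj F) ys" "xs \<noteq> []" "ys \<noteq> []" "last xs = hd ys"
  shows "successively (adj F) (xs @ tl ys)"
proof -
  obtain y zs where ys: "ys = y # zs" using assms(4) by (cases ys) auto
  show ?thesis using assms unfolding ys by (auto simp: successively_append_iff successively_Cons)
qed

lemma uwalk_take: "successively P xs \<Longrightarrow> successively P (take k xs)"
  unfolding successively_conv_nth by auto

lemma uwalk_drop: "successively P xs \<Longrightarrow> successively P (drop k xs)"
  unfolding successively_conv_nth by (auto simp: add.commute)

lemma dpath_uwalk: "is_dpath E xs u v \<Longrightarrow> successively (adj E) xs"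
  unfolding is_dpath_succ using successively_mono[of "\<lambda>x y. (x, y) \<in> E" xs "adj E"]
  by (auto simp: adj_def)

lemma pe_uwalk: "successively (adj (path_edges xs)) xs"
  using successively_mono[OF successively_path_edges, of xs "adj (path_edges xs)"] by (auto simp: adj_def)

lemma cyc_of_uwalk:
  assumes "cs \<noteq> []" "successively (adj F) (cs @ [hd cs])"
  shows "cyc F cs"
  unfolding cyc_def
proof (intro allI impI)
  fix i assume i: "i < length cs"
  have w: "adj F ((cs @ [hd cs]) ! i) ((cs @ [hd cs]) ! Suc i)" using successively_nth[OF assms(2)] i by simp
  show "adj F (cs ! i) (cs ! (Suc i mod length cs))"
  proof (cases "Suc i < length cs")
    case True then show ?thesis using w i by (simp add: nth_append)
  next
    case False then have "Suc i = length cs" using i by simp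
    then show ?thesis using w i assms(1) by (simp add: nth_append hd_conv_nth)
  qed
qed

lemma uwalk_of_cyc:
  assumes "cyc F cs" "cs \<noteq> []"
  shows "successively (adj F) (cs @ [hd cs])"
  unfolding successively_conv_nth
proof (intro allI impI)
  fix i assume "Suc i < length (cs @ [hd cs])"
  then have i: "i < length cs" by simp
  have c: "adj F (cs ! i) (cs ! (Suc i mod length cs))" using assms(1) i unfolding cyc_def by auto
  show "adj F ((cs @ [hd cs]) ! i) ((cs @ [hd cs]) ! Suc i)"
  proof (cases "Suc i < length cs")
    case True then show ?thesis using c i by (simp add: nth_append)
  next
    case False then have "Suc i = length cs" using i by simp
    then show ?thesis using c i assms(2) by (simp add: nth_append hd_conv_nth)
  qed
qed

lemma cyc_rotate:
  assumes "cyc F cs"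
  shows "cyc F (rotate k cs)"
  unfolding cyc_def
proof (intro allI impI)
  fix i assume i: "i < length (rotate k cs)"
  define n where "n = length cs"
  have n: "i < n" "0 < n" using i n_def by auto
  have r1: "rotate k cs ! i = cs ! ((k + i) mod n)" using n by (simp add: nth_rotate n_def)
  have "Suc i mod n < n" using n by simp
  then have "rotate k cs ! (Suc i mod n) = cs ! ((k + Suc i mod n) mod n)" by (simp add: nth_rotate n_def)
  also have "(k + Suc i mod n) mod n = Suc ((k + i) mod n) mod n"
    by (simp add: mod_add_right_eq mod_Suc_eq)
  finally have r2: "rotate k cs ! (Suc i mod n) = cs ! (Suc ((k + i) mod n) mod n)" .
  have "(k + i) mod n < n" using n by simp
  then have "adj F (cs ! ((k + i) mod n)) (cs ! (Suc ((k + i) mod n) mod n))" using assms unfolding cyc_def n_def by blast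
  then show "adj F (rotate k cs ! i) (rotate k cs ! (Suc i mod length (rotate k cs)))"
    using r1 r2 by (simp add: n_def)
qed

lemma ES_Union: "cs \<noteq> [] \<Longrightarrow> \<Union> (ES cs) = set cs"
proof
  assume "cs \<noteq> []"
  show "\<Union> (ES cs) \<subseteq> set cs" unfolding ES_def using \<open>cs \<noteq> []\<close> by auto
  show "set cs \<subseteq> \<Union> (ES cs)"
  proof
    fix x assume "x \<in> set cs"
    then obtain i where "i < length cs" "cs ! i = x" by (metis in_set_conv_nth)
    then show "x \<in> \<Union> (ES cs)" unfolding ES_def by blast
  qed
qed

lemma cycle_in_undir: "distinct cs \<Longrightarrow> length cs \<ge> 3 \<Longrightarrow> cyc E cs \<Longrightarrow> ES cs \<in> undir_cycles E"
  unfolding undir_cycles_def ES_def cyc_def adj_def by blast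

lemma cactus_edge_cycles:
  assumes "cactus_network V E" "adj E x y" "C1 \<in> undir_cycles E" "C2 \<in> undir_cycles E"
    "{x, y} \<in> C1" "{x, y} \<in> C2"
  shows "C1 = C2"
proof -
  have H: "\<forall>x y. (x, y) \<in> E \<longrightarrow> (\<forall>C1 \<in> undir_cycles E. \<forall>C2 \<in> undir_cycles E.
          {x, y} \<in> C1 \<longrightarrow> {x, y} \<in> C2 \<longrightarrow> C1 = C2)" using assms(1) unfolding cactus_network_def by blast
  show ?thesis
  proof (cases "(x, y) \<in> E")
    case True then show ?thesis using H assms(3-6) by blast
  next
    case False then have "(y, x) \<in> E" using assms(2) unfolding adj_def by blast
    moreover have "{y, x} = {x, y}" by blast
    ultimately show ?thesis using H assms(3-6) by metis
  qed
qed

lemma acyc_cactus: "cactus_network V E \<Longrightarrow> acyc E"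
  unfolding cactus_network_def acyc_def by blast

lemma list_mid: "length T \<ge> 2 \<Longrightarrow> T = hd T # butlast (tl T) @ [last T]"
proof (cases T)
  case Nil assume "length T \<ge> 2" then show ?thesis using Nil by simp
next
  case (Cons a rest)
  assume "length T \<ge> 2"
  then have "rest \<noteq> []" using Cons by auto
  then show ?thesis using Cons by simp
qed

lemma nth_in_take_iff:
  assumes "distinct xs" "k < length xs"
  shows "xs ! k \<in> set (take d xs) \<longleftrightarrow> k < d"
proof
  assume "k < d" then show "xs ! k \<in> set (take d xs)" using assms(2)
    by (metis in_set_conv_nth length_take min_less_iff_conj nth_take)
next
  assume a: "xs ! k \<in> set (take d xs)"
  then obtain l where l: "l < length (take d xs)" "take d xs ! l = xs ! k" by (metis in_set_conv_nth)
  then have "xs ! l = xs ! k" "l < d" "l < length xs" by auto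
  then have "l = k" using assms nth_eq_iff_index_eq by metis
  then show "k < d" using \<open>l < d\<close> by simp
qed

lemma nth_in_drop_iff:
  assumes "distinct xs" "k < length xs"
  shows "xs ! k \<in> set (drop d xs) \<longleftrightarrow> d \<le> k"
proof
  assume dk: "d \<le> k"
  have "k - d < length (drop d xs)" using dk assms(2) by simp
  moreover have "drop d xs ! (k - d) = xs ! k" using dk assms(2) by simp
  ultimately show "xs ! k \<in> set (drop d xs)" by (metis nth_mem)
next
  assume a: "xs ! k \<in> set (drop d xs)"
  then obtain l where l: "l < length (drop d xs)" "drop d xs ! l = xs ! k" by (metis in_set_conv_nth)
  then have "xs ! (d + l) = xs ! k" "d + l < length xs" by auto
  then have "d + l = k" using assms nth_eq_iff_index_eq by metis
  then show "d \<le> k" by simp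
qed


lemma KL0:
  assumes cact: "cactus_network V E"
    and cF: "cyc F cs" and FE: "F \<subseteq> E" and dcs: "distinct cs" and n3: "length cs \<ge> 3"
    and Tne: "T \<noteq> []" and dT: "distinct T" and wT: "successively (adj E) T"
    and hT: "hd T = cs ! 0" and lT: "last T = cs ! j" and j: "0 < j" "j < length cs"
    and mid: "set (butlast (tl T)) \<inter> set cs = {}"
    and ear: "length T \<ge> 3 \<or> \<not> adj F (hd T) (last T)"
  shows False
proof -
  define n where "n = length cs"
  define M where "M = butlast (tl T)"
  have n: "n \<ge> 3" "j < n" using n3 j n_def by auto
  have csne: "cs \<noteq> []" using n n_def by auto
  have "cs ! 0 \<noteq> cs ! j" using nth_eq_iff_index_eq[OF dcs _ j(2), of 0] j csne by auto
  then have hl: "hd T \<noteq> last T" using hT lT by simp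
  have T2: "length T \<ge> 2"
  proof (rule ccontr)
    assume "\<not> length T \<ge> 2"
    moreover have "length T > 0" using Tne by simp
    ultimately have "length T = 1" by linarith
    then obtain a where "T = [a]" by (cases T) auto
    then show False using hl by simp
  qed
  have Tm: "T = hd T # M @ [last T]" using list_mid[OF T2] M_def by simp
  have dd: "distinct (hd T # M @ [last T])" using dT Tm by metis
  then have dM: "distinct M" "hd T \<notin> set M" "last T \<notin> set M" by auto
  have setT: "set T = insert (hd T) (insert (last T) (set M))" using Tm by (metis Un_insert_right append_Nil2 list.simps(15) set_append)
  have lenT: "length T = length M + 2" using Tm by (metis length_Cons length_append_singleton add_2_eq_Suc')
  have midM: "set M \<inter> set cs = {}" using mid M_def by simp
  have hdcs: "hd cs = cs ! 0" using csne by (simp add: hd_conv_nth)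
  define cl where "cl = cs @ [hd cs]"
  have ucl: "successively (adj E) cl" using uwalk_mono[OF FE uwalk_of_cyc[OF cF csne]] cl_def by simp
  have T1: "T ! 1 = (if M = [] then last T else hd M)" using Tm
    by (metis (no_types, lifting) One_nat_def append_Cons append_Nil hd_conv_nth nth_Cons_Suc nth_Cons_0 nth_append length_greater_0_conv)
  have adj01: "adj E (T ! 0) (T ! 1)" using successively_nth[OF wT, of 0] T2 by simp
  have T0: "T ! 0 = hd T" using Tne by (simp add: hd_conv_nth)
  define c2 where "c2 = take (Suc j) cs @ rev M"
  define c3 where "c3 = T @ drop (Suc j) cs"
  have tk1: "take (Suc j) cs \<noteq> []" using csne by simp
  have tk2: "last (take (Suc j) cs) = cs ! j" using n n_def csne by (simp add: take_Suc_conv_app_nth)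
  have tk3: "hd (take (Suc j) cs) = cs ! 0" using csne by (cases cs) auto
  note tk = tk1 tk2 tk3
  have revT: "rev T = last T # rev M @ [hd T]" using Tm by (metis rev.simps(2) rev_append rev_singleton_conv append_Cons append_Nil rev_rev_ident)
  have c2ne: "c2 \<noteq> []" using tk c2_def by simp
  have hdc2: "hd c2 = cs ! 0" using tk c2_def by simp
  have tlrev: "tl (rev T) = rev M @ [hd T]" by (subst revT) simp
  have "c2 @ [hd c2] = c2 @ [cs ! 0]" using hdc2 by simp
  also have "\<dots> = take (Suc j) cs @ rev M @ [hd T]" using hT c2_def by simp
  finally have X: "c2 @ [hd c2] = take (Suc j) cs @ rev M @ [hd T]" .
  have c2cl: "c2 @ [hd c2] = take (Suc j) cs @ tl (rev T)" unfolding tlrev by (rule X)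
  have "take (Suc j) cs = take (Suc j) cl" using n n_def csne cl_def by simp
  then have w1: "successively (adj E) (take (Suc j) cs)" using uwalk_take[OF ucl] by metis
  have w2: "successively (adj E) (rev T)" using wT uwalk_rev by metis
  have rTne: "rev T \<noteq> []" using Tne by simp
  have "last (take (Suc j) cs) = hd (rev T)" using tk2 lT by (simp add: hd_rev)
  then have "successively (adj E) (take (Suc j) cs @ tl (rev T))" using uwalk_join[OF w1 w2 tk1 rTne] by blast
  then have "successively (adj E) (c2 @ [hd c2])" unfolding c2cl .
  then have cyc2: "cyc E c2" using cyc_of_uwalk c2ne by metis
  have dc2: "distinct c2" unfolding c2_def using dcs dM midM set_take_subset by fastforce
  have lc2: "length c2 = Suc j + length M" using n n_def csne c2_def by simp
  have dropj: "drop j cs = cs ! j # drop (Suc j) cs" using n n_def csne by (simp add: Cons_nth_drop_Suc)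
  have dcl: "drop j cl = cs ! j # drop (Suc j) cs @ [hd cs]" using n n_def csne dropj cl_def by simp
  have c3ne: "c3 \<noteq> []" using Tne c3_def by simp
  have hdc3: "hd c3 = hd T" using Tne c3_def by simp
  have c3cl: "c3 @ [hd c3] = T @ tl (drop j cl)" using dcl hdc3 hT hdcs c3_def by simp
  have w3: "successively (adj E) (drop j cl)" using uwalk_drop[OF ucl] .
  have dclne: "drop j cl \<noteq> []" using dcl by simp
  have "last T = hd (drop j cl)" using dcl lT by simp
  then have "successively (adj E) (T @ tl (drop j cl))" using uwalk_join[OF wT w3 Tne dclne] by blast
  then have "successively (adj E) (c3 @ [hd c3])" unfolding c3cl .
  then have cyc3: "cyc E c3" using cyc_of_uwalk c3ne by metis
  have disj3: "set T \<inter> set (drop (Suc j) cs) = {}"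
  proof (rule ccontr)
    assume "set T \<inter> set (drop (Suc j) cs) \<noteq> {}"
    then obtain x where x: "x \<in> set T" "x \<in> set (drop (Suc j) cs)" by blast
    then have "x \<in> set cs" by (metis in_set_dropD)
    then have "x = hd T \<or> x = last T" using x setT midM by blast
    moreover have "cs ! 0 \<notin> set (drop (Suc j) cs)" using nth_in_drop_iff[OF dcs, of 0 "Suc j"] n n_def csne csne by simp
    moreover have "cs ! j \<notin> set (drop (Suc j) cs)" using nth_in_drop_iff[OF dcs, of j "Suc j"] n n_def csne by simp
    ultimately show False using x(2) hT lT by auto
  qed
  have dc3: "distinct c3" unfolding c3_def using dT dcs disj3 by simp
  have lc3: "length c3 = length T + (n - Suc j)" using c3_def n_def by simp
  have len2: "length c2 \<ge> 3"
  proof (cases "length T \<ge> 3")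
    case True then show ?thesis using lc2 lenT j by simp
  next
    case False
    then have na: "\<not> adj F (hd T) (last T)" using ear by simp
    have "j \<noteq> 1"
    proof
      assume "j = 1"
      have "0 < length cs" using csne by simp
      then have "adj F (cs ! 0) (cs ! (Suc 0 mod length cs))" using cF unfolding cyc_def by blast
      moreover have "Suc 0 mod length cs = 1" using n n_def csne by simp
      ultimately have "adj F (cs ! 0) (cs ! j)" using \<open>j = 1\<close> by simp
      then show False using na hT lT by simp
    qed
    then show ?thesis using lc2 j by simp
  qed
  have len3: "length c3 \<ge> 3"
  proof (cases "length T \<ge> 3")
    case True then show ?thesis using lc3 by simp
  next
    case False
    then have na: "\<not> adj F (hd T) (last T)" using ear by simp
    have "j \<noteq> n - 1"
    proof
      assume jn: "j = n - 1"
      have "n - 1 < length cs" using n n_def csne by simp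
      then have "adj F (cs ! (n - 1)) (cs ! (Suc (n - 1) mod length cs))" using cF unfolding cyc_def by blast
      moreover have "Suc (n - 1) = length cs" using n n_def csne by simp
      then have "Suc (n - 1) mod length cs = 0" by simp
      ultimately have "adj F (cs ! j) (cs ! 0)" using jn by simp
      then show False using na hT lT adj_sym by metis
    qed
    then show ?thesis using lc3 T2 n by simp
  qed
  have C2: "ES c2 \<in> undir_cycles E" using cycle_in_undir[OF dc2 len2 cyc2] .
  have C3: "ES c3 \<in> undir_cycles E" using cycle_in_undir[OF dc3 len3 cyc3] .
  have e3: "{T ! 0, T ! 1} \<in> ES c3"
  proof -
    have "c3 ! 0 = T ! 0" "c3 ! 1 = T ! 1" using T2 c3_def by (auto simp: nth_append)
    moreover have "Suc 0 mod length c3 = 1" using len3 by simp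
    ultimately show ?thesis unfolding ES_def using len3 by (intro CollectI exI[of _ 0]) auto
  qed
  have e2: "{T ! 0, T ! 1} \<in> ES c2"
  proof -
    define i where "i = length c2 - 1"
    have i1: "i < length c2" "Suc i = length c2" using len2 i_def by auto
    then have i: "i < length c2" "Suc i mod length c2 = 0" by auto
    have "c2 ! 0 = T ! 0" using c2_def T0 hT csne by (simp add: nth_append)
    moreover have "c2 ! i = T ! 1"
    proof -
      have "c2 ! i = last c2" using i_def c2ne by (simp add: last_conv_nth)
      also have "\<dots> = T ! 1"
      proof (cases "M = []")
        case True then show ?thesis using tk c2_def T1 lT by simp
      next
        case False then show ?thesis using c2_def T1 by (simp add: last_rev)
      qed
      finally show ?thesis .
    qed
    ultimately have "{c2 ! i, c2 ! (Suc i mod length c2)} = {T ! 0, T ! 1}" using i by auto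
    then show ?thesis unfolding ES_def using i by blast
  qed
  have eq: "ES c2 = ES c3" using cactus_edge_cycles[OF cact adj01 C2 C3 e2 e3] .
  have "set c2 = set c3" using ES_Union[OF c2ne] ES_Union[OF c3ne] eq by simp
  moreover have "set c2 \<noteq> set c3"
  proof (cases "j = 1")
    case False
    then have j2: "j \<ge> 2" using j by simp
    have "cs ! 1 \<in> set c2" using nth_in_take_iff[OF dcs, of 1 "Suc j"] n n_def csne j2 c2_def by simp
    moreover have "cs ! 1 \<notin> set c3"
    proof
      assume "cs ! 1 \<in> set c3"
      then consider "cs ! 1 \<in> set T" | "cs ! 1 \<in> set (drop (Suc j) cs)" using c3_def by auto
      then show False
      proof cases
        case 1
        then have "cs ! 1 = hd T \<or> cs ! 1 = last T \<or> cs ! 1 \<in> set M" using setT by blast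
        moreover have "cs ! 1 \<in> set cs" using n n_def csne by simp
        moreover have "cs ! 1 \<noteq> cs ! 0" using nth_eq_iff_index_eq[OF dcs, of 1 0] n n_def csne by simp
        moreover have "cs ! 1 \<noteq> cs ! j" using nth_eq_iff_index_eq[OF dcs, of 1 j] n n_def csne j2 by simp
        ultimately show False using hT lT midM by auto
      next
        case 2 then show False using nth_in_drop_iff[OF dcs, of 1 "Suc j"] n n_def csne j2 by simp
      qed
    qed
    ultimately show ?thesis by blast
  next
    case True
    have "cs ! 2 \<in> set c3" using nth_in_drop_iff[OF dcs, of 2 "Suc j"] n n_def csne True c3_def by simp
    moreover have "cs ! 2 \<notin> set c2"
    proof
      assume "cs ! 2 \<in> set c2"
      then consider "cs ! 2 \<in> set (take (Suc j) cs)" | "cs ! 2 \<in> set M" using c2_def by auto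
      then show False
      proof cases
        case 1 then show False using nth_in_take_iff[OF dcs, of 2 "Suc j"] n n_def csne True by simp
      next
        case 2 then show False using midM n n_def csne by auto
      qed
    qed
    ultimately show ?thesis by blast
  qed
  ultimately show False by blast
qed

lemma KL:
  assumes cact: "cactus_network V E"
    and cF: "cyc F cs" and FE: "F \<subseteq> E" and dcs: "distinct cs" and n3: "length cs \<ge> 3"
    and Tne: "T \<noteq> []" and dT: "distinct T" and wT: "successively (adj E) T"
    and hT: "hd T \<in> set cs" and lT: "last T \<in> set cs" and hl: "hd T \<noteq> last T"
    and mid: "set (butlast (tl T)) \<inter> set cs = {}"
    and ear: "length T \<ge> 3 \<or> \<not> adj F (hd T) (last T)"
  shows False
proof -
  obtain i where i: "i < length cs" "cs ! i = hd T" using hT by (metis in_set_conv_nth)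
  define cs' where "cs' = rotate i cs"
  have l: "length cs' = length cs" using cs'_def by simp
  have s: "set cs' = set cs" using cs'_def by simp
  have "0 < length cs" using i(1) by (cases cs) auto
  then have "rotate i cs ! 0 = cs ! ((i + 0) mod length cs)" by (rule nth_rotate)
  then have h0: "cs' ! 0 = hd T" using i cs'_def by simp
  obtain j where j: "j < length cs'" "cs' ! j = last T" using lT s by (metis in_set_conv_nth)
  have "j \<noteq> 0"
  proof
    assume "j = 0"
    then have "last T = hd T" using j(2) h0 by simp
    then show False using hl by simp
  qed
  have cF': "cyc F cs'" using cyc_rotate[OF cF] cs'_def by simp
  have d': "distinct cs'" using dcs cs'_def by simp
  have n': "length cs' \<ge> 3" using n3 l by simp
  have m': "set (butlast (tl T)) \<inter> set cs' = {}" using mid s by simp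
  have jp: "0 < j" using \<open>j \<noteq> 0\<close> by simp
  show False using KL0[OF cact cF' FE d' n' Tne dT wT h0[symmetric] j(2)[symmetric] jp j(1) m' ear] .
qed

lemma exists_last_before:
  fixes P :: "nat \<Rightarrow> bool"
  assumes "P 0"
  shows "\<exists>i \<le> k. P i \<and> (\<forall>l. i < l \<and> l \<le> k \<longrightarrow> \<not> P l)"
proof (induction k)
  case 0 then show ?case using assms by auto
next
  case (Suc k)
  show ?case
  proof (cases "P (Suc k)")
    case True then show ?thesis by auto
  next
    case False
    from Suc obtain i where "i \<le> k" "P i" "\<forall>l. i < l \<and> l \<le> k \<longrightarrow> \<not> P l" by blast
    then show ?thesis using False by (intro exI[of _ i]) (auto simp: le_Suc_eq)
  qed
qed

lemma exists_first_after:
  fixes P :: "nat \<Rightarrow> bool"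
  assumes "i < m" "P m"
  shows "\<exists>k. i < k \<and> k \<le> m \<and> P k \<and> (\<forall>l. i < l \<and> l < k \<longrightarrow> \<not> P l)"
proof -
  define k where "k = (LEAST k. i < k \<and> P k)"
  have k1: "i < k \<and> P k" using LeastI[of "\<lambda>k. i < k \<and> P k" m] assms k_def by blast
  have k2: "k \<le> m" using Least_le[of "\<lambda>k. i < k \<and> P k" m] assms k_def by blast
  have k3: "\<forall>l. i < l \<and> l < k \<longrightarrow> \<not> P l" using not_less_Least[of _ "\<lambda>k. i < k \<and> P k"] k_def by blast
  show ?thesis using k1 k2 k3 by blast
qed

lemma mid_nth:
  assumes "x \<in> set (butlast (tl T))"
  shows "\<exists>l. 0 < l \<and> Suc l < length T \<and> x = T ! l"
proof -
  obtain m where m: "m < length (butlast (tl T))" "butlast (tl T) ! m = x" using assms by (metis in_set_conv_nth)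
  have "butlast (tl T) ! m = tl T ! m" using m(1) by (simp add: nth_butlast)
  also have "\<dots> = T ! Suc m" using m(1) by (simp add: nth_tl)
  finally show ?thesis using m by (intro exI[of _ "Suc m"]) auto
qed

lemma length_ge2:
  assumes "xs \<noteq> []" "hd xs \<noteq> last xs"
  shows "length xs \<ge> 2"
proof (rule ccontr)
  assume "\<not> length xs \<ge> 2"
  moreover have "length xs > 0" using assms(1) by simp
  ultimately have "length xs = 1" by linarith
  then obtain a where "xs = [a]" by (cases xs) auto
  then show False using assms(2) by simp
qed

lemma DEL:
  assumes cact: "cactus_network V E"
    and P1: "is_dpath E P1 a b" and P2: "is_dpath E P2 a b" and ne: "P1 \<noteq> P2"
    and disj: "set P1 \<inter> set P2 \<subseteq> {a, b}"
    and R: "is_dpath E R c d" and hR: "c \<in> set P1 \<union> set P2" and lR: "d \<in> set P1 \<union> set P2"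
    and notsub: "\<not> path_edges R \<subseteq> path_edges P1 \<union> path_edges P2"
  shows False
proof -
  have ac: "acyc E" using acyc_cactus[OF cact] .
  have d1: "distinct P1" using dpath_distinct[OF ac P1] .
  have d2: "distinct P2" using dpath_distinct[OF ac P2] .
  have dR: "distinct R" using dpath_distinct[OF ac R] .
  have P1h: "P1 \<noteq> []" "hd P1 = a" "last P1 = b" using dpath_ne[OF P1] by auto
  have P2h: "P2 \<noteq> []" "hd P2 = a" "last P2 = b" using dpath_ne[OF P2] by auto
  have Rh: "R \<noteq> []" "hd R = c" "last R = d" using dpath_ne[OF R] by auto
  have ab: "a \<noteq> b"
  proof
    assume "a = b"
    then have "P1 = [a]" "P2 = [a]" using dpath_loop[OF ac] P1 P2 by auto
    then show False using ne by simp
  qed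
  have l1: "length P1 \<ge> 2" using length_ge2 P1h ab by metis
  have l2: "length P2 \<ge> 2" using length_ge2 P2h ab by metis
  define M1 where "M1 = butlast (tl P1)"
  define M2 where "M2 = butlast (tl P2)"
  have P1m: "P1 = a # M1 @ [b]" using list_mid[OF l1] P1h M1_def by simp
  have P2m: "P2 = a # M2 @ [b]" using list_mid[OF l2] P2h M2_def by simp
  have "distinct (a # M2 @ [b])" using d2 P2m by metis
  then have dM2: "distinct M2" "a \<notin> set M2" "b \<notin> set M2" by auto
  have sP2: "set P2 = insert a (insert b (set M2))" using P2m by auto
  have M2P1: "set M2 \<inter> set P1 = {}"
  proof (rule ccontr)
    assume "set M2 \<inter> set P1 \<noteq> {}"
    then obtain x where "x \<in> set M2" "x \<in> set P1" by blast
    moreover then have "x \<in> set P2" using sP2 by blast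
    ultimately show False using disj dM2 by blast
  qed
  define F where "F = path_edges P1 \<union> path_edges P2"
  have FE: "F \<subseteq> E" using dpath_path_edges_subset[OF P1] dpath_path_edges_subset[OF P2] F_def by blast
  define cs where "cs = P1 @ rev M2"
  have csne: "cs \<noteq> []" using cs_def P1h by simp
  have dcs: "distinct cs" using d1 dM2 M2P1 cs_def by auto
  have scs: "set cs = set P1 \<union> set P2" using cs_def sP2 P1m by auto
  have lcs: "length cs \<ge> 3"
  proof (rule ccontr)
    assume "\<not> length cs \<ge> 3"
    then have "length P1 + length M2 < 3" using cs_def by simp
    then have "M1 = []" "M2 = []" using P1m l1 by auto
    then show False using ne P1m P2m by simp
  qed
  have hdcs: "hd cs = a" using cs_def P1h by simp
  have revP2: "rev P2 = b # rev M2 @ [a]" using P2m by simp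
  have ccl: "cs @ [hd cs] = P1 @ tl (rev P2)" using revP2 hdcs cs_def by simp
  have w1: "successively (adj F) P1" using uwalk_mono[OF _ pe_uwalk[of P1]] F_def by blast
  have w2': "successively (adj F) P2" using uwalk_mono[OF _ pe_uwalk[of P2]] F_def by blast
  have w2: "successively (adj F) (rev P2)" using w2' uwalk_rev by metis
  have rP2ne: "rev P2 \<noteq> []" using P2h by simp
  have "last P1 = hd (rev P2)" using P1h P2h by (simp add: hd_rev)
  then have "successively (adj F) (P1 @ tl (rev P2))" using uwalk_join[OF w1 w2 P1h(1) rP2ne] by blast
  then have cF: "cyc F cs" using cyc_of_uwalk[OF csne] ccl by metis
  define Cs where "Cs = set P1 \<union> set P2"
  \<comment> \<open>extraction of an ear\<close>
  obtain e where e: "e \<in> path_edges R" "e \<notin> F" using notsub F_def by blast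
  obtain k0 where k0: "Suc k0 < length R" "(R ! k0, R ! Suc k0) \<notin> F"
    using e unfolding path_edges_def by blast
  have R0: "R ! 0 \<in> Cs" using hR Rh Cs_def by (simp add: hd_conv_nth)
  obtain i where i: "i \<le> k0" "R ! i \<in> Cs" "\<forall>l. i < l \<and> l \<le> k0 \<longrightarrow> R ! l \<notin> Cs"
    using exists_last_before[of "\<lambda>l. R ! l \<in> Cs" k0] R0 by blast
  have Rlast: "R ! (length R - 1) \<in> Cs" using lR Rh Cs_def by (simp add: last_conv_nth)
  have ilt: "i < length R - 1" using i k0 by simp
  obtain k where k: "i < k" "k \<le> length R - 1" "R ! k \<in> Cs" "\<forall>l. i < l \<and> l < k \<longrightarrow> R ! l \<notin> Cs"
    using exists_first_after[of i "length R - 1" "\<lambda>l. R ! l \<in> Cs", OF ilt Rlast] by blast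
  have kl: "k < length R" using k(2) Rh by (cases R) auto
  have choice: "Suc (Suc i) \<le> k \<or> (R ! i, R ! Suc i) \<notin> F"
  proof (cases "i = k0")
    case True then show ?thesis using k0 by simp
  next
    case False
    then have "R ! Suc i \<notin> Cs" using i by auto
    then have "k \<noteq> Suc i" using k by auto
    then show ?thesis using k by simp
  qed
  define T where "T = drop i (take (Suc k) R)"
  have lT: "length T = Suc k - i" using T_def kl by simp
  have Tnth: "T ! l = R ! (i + l)" if "l < length T" for l using that T_def kl by simp
  have "0 < length T" using lT k by simp
  then have Tne: "T \<noteq> []" by (metis length_greater_0_conv)
  have hT: "hd T = R ! i" using Tnth[of 0] Tne by (simp add: hd_conv_nth)
  have lastT: "last T = R ! k" using Tnth[of "length T - 1"] Tne lT k by (simp add: last_conv_nth)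
  have dT: "distinct T" using dR T_def by simp
  have wT: "successively (adj E) T" using uwalk_drop[OF uwalk_take[OF dpath_uwalk[OF R]]] T_def by simp
  have hl: "hd T \<noteq> last T" using hT lastT nth_eq_iff_index_eq[OF dR _ kl, of i] k kl by simp
  have mid: "set (butlast (tl T)) \<inter> set cs = {}"
  proof (rule ccontr)
    assume "set (butlast (tl T)) \<inter> set cs \<noteq> {}"
    then obtain x where x: "x \<in> set (butlast (tl T))" "x \<in> set cs" by blast
    obtain l where l: "0 < l" "Suc l < length T" "x = T ! l" using mid_nth[OF x(1)] by blast
    have "x = R ! (i + l)" using Tnth l by simp
    moreover have "i < i + l" "i + l < k" using l lT by auto
    ultimately have "x \<notin> Cs" using k(4) by blast
    then show False using x(2) scs Cs_def by simp
  qed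
  have ear: "length T \<ge> 3 \<or> \<not> adj F (hd T) (last T)"
  proof (cases "Suc (Suc i) \<le> k")
    case True then have "3 \<le> length T" using lT by arith
    then show ?thesis by simp
  next
    case False
    then have ki: "k = Suc i" using k by simp
    then have nf: "(R ! i, R ! Suc i) \<notin> F" using choice False by simp
    have e: "(R ! i, R ! Suc i) \<in> E" using R ki kl unfolding is_dpath_def by auto
    have "(R ! Suc i, R ! i) \<notin> F"
    proof
      assume "(R ! Suc i, R ! i) \<in> F"
      then have "(R ! Suc i, R ! i) \<in> E" using FE by blast
      then show False using acyc_edge_reach[OF ac e] edge_reach by metis
    qed
    then show ?thesis using nf hT lastT ki unfolding adj_def by simp
  qed
  have hTc: "hd T \<in> set cs" using hT i scs Cs_def by simp
  have lTc: "last T \<in> set cs" using lastT k scs Cs_def by simp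
  show False using KL[OF cact cF FE dcs lcs Tne dT wT hTc lTc hl mid ear] .
qed

lemma pe_not_last:
  assumes "distinct xs" "(x, y) \<in> path_edges xs"
  shows "x \<noteq> last xs"
proof -
  obtain i where i: "Suc i < length xs" "x = xs ! i" "y = xs ! Suc i" using assms(2) unfolding path_edges_nth by blast
  have ne: "xs \<noteq> []" using i(1) by (cases xs) auto
  have "last xs = xs ! (length xs - 1)" using ne by (simp add: last_conv_nth)
  moreover have "xs ! i \<noteq> xs ! (length xs - 1)" using nth_eq_iff_index_eq[OF assms(1), of i "length xs - 1"] i(1) by auto
  ultimately show ?thesis using i by simp
qed

lemma pe_not_hd:
  assumes "distinct xs" "(x, y) \<in> path_edges xs"
  shows "y \<noteq> hd xs"
proof -
  obtain i where i: "Suc i < length xs" "x = xs ! i" "y = xs ! Suc i" using assms(2) unfolding path_edges_nth by blast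
  have ne: "xs \<noteq> []" using i(1) by (cases xs) auto
  have "hd xs = xs ! 0" using ne by (simp add: hd_conv_nth)
  moreover have "xs ! Suc i \<noteq> xs ! 0" using nth_eq_iff_index_eq[OF assms(1), of "Suc i" 0] i(1) ne by auto
  ultimately show ?thesis using i by simp
qed

lemma pe_into_last_unique:
  assumes "distinct xs" "(x, last xs) \<in> path_edges xs" "(x', last xs) \<in> path_edges xs"
  shows "x = x'"
proof -
  obtain i where i: "Suc i < length xs" "x = xs ! i" "last xs = xs ! Suc i" using assms(2) unfolding path_edges_nth by blast
  obtain i' where i': "Suc i' < length xs" "x' = xs ! i'" "last xs = xs ! Suc i'" using assms(3) unfolding path_edges_nth by blast
  have "Suc i = Suc i'" using nth_eq_iff_index_eq[OF assms(1) i(1) i'(1)] i(3) i'(3) by simp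
  then show ?thesis using i i' by simp
qed

lemma pe_last_edge:
  assumes "length xs \<ge> 2"
  shows "(xs ! (length xs - 2), last xs) \<in> path_edges xs"
proof -
  have "Suc (length xs - 2) < length xs" "Suc (length xs - 2) = length xs - 1" using assms by arith+
  moreover have "last xs = xs ! (length xs - 1)" using assms by (cases xs) (auto simp: last_conv_nth)
  ultimately show ?thesis unfolding path_edges_nth by (intro exI[of _ "length xs - 2"]) simp
qed

lemma in_pe_pred:
  assumes "w \<in> set xs" "w \<noteq> hd xs"
  shows "\<exists>x. (x, w) \<in> path_edges xs"
proof -
  obtain i where i: "i < length xs" "xs ! i = w" using assms(1) by (metis in_set_conv_nth)
  have ne: "xs \<noteq> []" using i(1) by (cases xs) auto
  have "i \<noteq> 0"
  proof
    assume "i = 0"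
    then have "w = hd xs" using i ne by (simp add: hd_conv_nth)
    then show False using assms(2) by simp
  qed
  then obtain k where k: "i = Suc k" by (cases i) auto
  show ?thesis unfolding path_edges_nth using i k by (intro exI[of _ "xs ! k"] exI[of _ k]) simp
qed

lemma pe_snoc: "xs \<noteq> [] \<Longrightarrow> path_edges (xs @ [y]) = insert (last xs, y) (path_edges xs)"
  by (simp add: path_edges_append)

lemma finite_E: "cactus_network V E \<Longrightarrow> finite E"
  unfolding cactus_network_def by (meson finite_SigmaI finite_subset)

lemma wf_E: "cactus_network V E \<Longrightarrow> wf E"
proof -
  assume c: "cactus_network V E"
  have "acyclic E" using c unfolding cactus_network_def acyclic_def by blast
  then show "wf E" using finite_acyclic_wf finite_E[OF c] by blast
qed

lemma wf_E_conv: "cactus_network V E \<Longrightarrow> wf ((E\<inverse>)\<^sup>+)"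
proof -
  assume c: "cactus_network V E"
  have "acyclic E" using c unfolding cactus_network_def acyclic_def by blast
  then have "acyclic (E\<inverse>)" by (simp add: acyclic_converse)
  moreover have "finite (E\<inverse>)" using finite_E[OF c] by simp
  ultimately have "wf (E\<inverse>)" using finite_acyclic_wf by blast
  then show ?thesis using wf_trancl by blast
qed

lemma root_reaches:
  assumes c: "cactus_network V E"
  shows "\<exists>r \<in> V. \<forall>x \<in> V. reach E r x"
proof -
  obtain r where r: "r \<in> V" "\<forall>x. (x, r) \<notin> E" "\<And>r'. r' \<in> V \<and> (\<forall>x. (x, r') \<notin> E) \<Longrightarrow> r' = r"
    using c unfolding cactus_network_def by metis
  have EV: "E \<subseteq> V \<times> V" using c unfolding cactus_network_def by blast
  have "reach E r x" if x: "x \<in> V" for x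
  proof -
    define S where "S = {z \<in> V. reach E z x}"
    have "x \<in> S" using x unfolding S_def reach_def by blast
    then obtain z where z: "z \<in> S" "\<forall>y. (y, z) \<in> E \<longrightarrow> y \<notin> S"
      using wf_E[OF c] unfolding wf_eq_minimal by blast
    have "\<forall>y. (y, z) \<notin> E"
    proof (intro allI notI)
      fix y assume yz: "(y, z) \<in> E"
      then have yV: "y \<in> V" using EV by blast
      have zx: "reach E z x" using z(1) unfolding S_def by blast
      have "reach E y x" using reach_trans[OF edge_reach[OF yz] zx] .
      then have "y \<in> S" using yV unfolding S_def by blast
      then show False using z(2) \<open>(y, z) \<in> E\<close> by blast
    qed
    then have "z = r" using r(3) z(1) S_def by blast
    then show ?thesis using z(1) S_def by simp
  qed
  then show ?thesis using r(1) by blast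
qed

lemma lca_exists:
  assumes c: "cactus_network V E" and "u \<in> V" "p \<in> V"
  shows "\<exists>w \<in> V. reach E w u \<and> reach E w p \<and> (\<forall>w'. w' \<noteq> w \<and> reach E w w' \<and> reach E w' u \<and> reach E w' p \<longrightarrow> False)"
proof -
  obtain r where r: "r \<in> V" "\<forall>x \<in> V. reach E r x" using root_reaches[OF c] by blast
  have EV: "E \<subseteq> V \<times> V" using c unfolding cactus_network_def by blast
  define S where "S = {w \<in> V. reach E w u \<and> reach E w p}"
  have "r \<in> S" using r assms S_def by simp
  then obtain z where z: "z \<in> S" "\<forall>y. (y, z) \<in> (E\<inverse>)\<^sup>+ \<longrightarrow> y \<notin> S"
    using wf_E_conv[OF c] unfolding wf_eq_minimal by blast
  have "\<forall>w'. w' \<noteq> z \<and> reach E z w' \<and> reach E w' u \<and> reach E w' p \<longrightarrow> False"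
  proof (intro allI impI)
    fix w' assume w': "w' \<noteq> z \<and> reach E z w' \<and> reach E w' u \<and> reach E w' p"
    then have "(z, w') \<in> E\<^sup>+" unfolding reach_def by (metis rtrancl_eq_or_trancl)
    then have zw: "(w', z) \<in> (E\<inverse>)\<^sup>+" by (simp add: trancl_converse)
    have "w' \<in> V" using \<open>(z, w') \<in> E\<^sup>+\<close> EV by (metis mem_Sigma_iff subsetD trancl.cases)
    then have "w' \<in> S" using w' S_def by simp
    then show False using z(2) zw by blast
  qed
  then show ?thesis using z(1) S_def by blast
qed

lemma follow:
  assumes "path_edges R \<subseteq> path_edges A \<union> path_edges B" "R \<noteq> []" "hd R \<in> set A" "hd R \<noteq> a"
    "distinct A" "distinct B" "hd A = a" "last B = b" "set A \<inter> set B \<subseteq> {a, b}"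
  shows "path_edges R \<subseteq> path_edges A"
  using assms(1-4)
proof (induction R rule: induct_list012)
  case 1 then show ?case by simp
next
  case (2 x) then show ?case by simp
next
  case (3 x y zs)
  have xy: "(x, y) \<in> path_edges A \<union> path_edges B" using "3.prems"(1) by simp
  have xA: "x \<in> set A" "x \<noteq> a" using "3.prems" by auto
  have xyA: "(x, y) \<in> path_edges A"
  proof (rule ccontr)
    assume "(x, y) \<notin> path_edges A"
    then have "(x, y) \<in> path_edges B" using xy by blast
    then have "x \<in> set B" "x \<noteq> last B" using path_edges_subset pe_not_last[OF assms(6)] by metis+
    then show False using xA assms(8,9) by blast
  qed
  have yA: "y \<in> set A" "y \<noteq> a" using path_edges_subset[OF xyA] pe_not_hd[OF assms(5) xyA] assms(7) by auto
  have "path_edges (y # zs) \<subseteq> path_edges A" using "3.IH"(2) "3.prems"(1) yA by simp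
  then show ?case using xyA by simp
qed


lemma pe_fst: "(a, b) \<in> path_edges xs \<Longrightarrow> a \<in> set xs" using path_edges_subset by metis
lemma pe_snd: "(a, b) \<in> path_edges xs \<Longrightarrow> b \<in> set xs" using path_edges_subset by metis

lemma set_sub_range:
  assumes "x \<in> set (drop i (take (Suc k) R))" "k < length R"
  shows "\<exists>l. i \<le> l \<and> l \<le> k \<and> x = R ! l"
proof -
  obtain m where m: "m < length (drop i (take (Suc k) R))" "drop i (take (Suc k) R) ! m = x"
    using assms(1) by (metis in_set_conv_nth)
  have "m < Suc k - i" using m(1) assms(2) by simp
  moreover then have "drop i (take (Suc k) R) ! m = R ! (i + m)" using assms(2) by simp
  ultimately show ?thesis using m(2) by (intro exI[of _ "i + m"]) auto
qed

lemma H: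
  assumes cact: "cactus_network V E"
    and A: "is_dpath E A u y" and B: "is_dpath E B u y" and AB: "set A \<inter> set B \<subseteq> {u, y}"
    and pa: "(pa, y) \<in> path_edges A" and npb: "(pa, y) \<notin> path_edges B"
    and Dz: "is_dpath E Dz y z" and Rz: "is_dpath E Rz c z" and cA: "c \<in> set A" and cy: "c \<noteq> y"
    and yR: "y \<notin> set Rz"
    and Rint: "\<forall>x \<in> set Rz. x \<noteq> c \<longrightarrow> x \<noteq> z \<longrightarrow> x \<notin> set A \<union> set B \<and> x \<notin> set Dz"
  shows False
proof -
  have ac: "acyc E" using acyc_cactus[OF cact] .
  obtain A1 A2 where A1: "is_dpath E A1 u c" and A2: "is_dpath E A2 c y" and Aeq: "A = A1 @ tl A2"
    using path_split[OF A cA] by metis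
  have sA: "set A = set A1 \<union> set A2" using set_join_dpath[OF A1 A2] Aeq by simp
  have peA: "path_edges A = path_edges A1 \<union> path_edges A2" using pe_join_dpath[OF A1 A2] Aeq by simp
  have yA1: "y \<notin> set A1"
  proof
    assume "y \<in> set A1"
    then have "reach E y c" using reach_mem[OF A1] by blast
    moreover have "reach E c y" using dpath_reach[OF A2] .
    ultimately show False using reach_antisym[OF ac] cy by metis
  qed
  have "(pa, y) \<notin> path_edges A1" using yA1 pe_snd by metis
  then have paA2: "(pa, y) \<in> path_edges A2" using peA pa by blast
  define P1 where "P1 = A1 @ tl Rz"
  define P2 where "P2 = B @ tl Dz"
  have P1: "is_dpath E P1 u z" using dpath_concat[OF A1 Rz] P1_def by simp
  have P2: "is_dpath E P2 u z" using dpath_concat[OF B Dz] P2_def by simp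
  have sP1: "set P1 = set A1 \<union> set Rz" using set_join_dpath[OF A1 Rz] P1_def by simp
  have sP2: "set P2 = set B \<union> set Dz" using set_join_dpath[OF B Dz] P2_def by simp
  have peP1: "path_edges P1 = path_edges A1 \<union> path_edges Rz" using pe_join_dpath[OF A1 Rz] P1_def by simp
  have peP2: "path_edges P2 = path_edges B \<union> path_edges Dz" using pe_join_dpath[OF B Dz] P2_def by simp
  have yB: "y \<in> set B" using dpath_ne[OF B] by (metis last_in_set)
  have yP1: "y \<notin> set P1" using sP1 yA1 yR by simp
  have ne: "P1 \<noteq> P2" using yP1 yB sP2 by auto
  have inD: "x = y" if "x \<in> set A \<union> set B" "x \<in> set Dz" for x
  proof -
    have "reach E x y" using that(1) reach_mem[OF A] reach_mem[OF B] by blast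
    moreover have "reach E y x" using that(2) reach_mem[OF Dz] by blast
    ultimately show ?thesis using reach_antisym[OF ac] by metis
  qed
  have cR: "c \<in> set Rz" using dpath_ne[OF Rz] by (metis list.set_sel(1))
  have disj: "set P1 \<inter> set P2 \<subseteq> {u, z}"
  proof
    fix x assume x: "x \<in> set P1 \<inter> set P2"
    then have x1: "x \<in> set A1 \<or> x \<in> set Rz" and x2: "x \<in> set B \<or> x \<in> set Dz" using sP1 sP2 by auto
    show "x \<in> {u, z}"
    proof (cases "x \<in> set A1")
      case True
      then have xA: "x \<in> set A" "x \<noteq> y" using sA yA1 by auto
      show ?thesis
      proof (cases "x \<in> set B")
        case True then show ?thesis using xA AB by blast
      next
        case False then have "x \<in> set Dz" using x2 by simp
        then show ?thesis using inD xA by blast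
      qed
    next
      case False
      then have xR: "x \<in> set Rz" using x1 by simp
      show ?thesis
      proof (cases "x = z")
        case True then show ?thesis by simp
      next
        case xz: False
        show ?thesis
        proof (cases "x = c")
          case True
          show ?thesis
          proof (cases "x \<in> set B")
            case True then show ?thesis using AB cA \<open>x = c\<close> cy by blast
          next
            case False then have "x \<in> set Dz" using x2 by simp
            then show ?thesis using inD cA \<open>x = c\<close> cy by blast
          qed
        next
          case False
          then show ?thesis using Rint xR xz x2 by blast
        qed
      qed
    qed
  qed
  have hA2: "c \<in> set P1" using sP1 cR by simp
  have lA2: "y \<in> set P2" using sP2 yB by simp
  have pay: "(pa, y) \<in> E" using pa dpath_path_edges_subset[OF A] by blast
  have paD: "pa \<notin> set Dz"
  proof
    assume "pa \<in> set Dz"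
    moreover have "pa \<in> set A" using pa pe_fst by metis
    ultimately have "pa = y" using inD by blast
    then show False using acyc_edge_neq[OF ac pay] by simp
  qed
  have n1: "(pa, y) \<notin> path_edges A1" using yA1 pe_snd by metis
  have n2: "(pa, y) \<notin> path_edges Rz" using yR pe_snd by metis
  have n3: "(pa, y) \<notin> path_edges Dz" using paD pe_fst by metis
  have "(pa, y) \<notin> path_edges P1 \<union> path_edges P2"
    using peP1 peP2 n1 n2 n3 npb by blast
  then have notsub: "\<not> path_edges A2 \<subseteq> path_edges P1 \<union> path_edges P2" using paA2 by blast
  show False using DEL[OF cact P1 P2 ne disj A2 _ _ notsub] hA2 lA2 by blast
qed

lemma F3core:
  assumes cact: "cactus_network V E"
    and A: "is_dpath E A u y" and B: "is_dpath E B u y" and AB: "set A \<inter> set B \<subseteq> {u, y}" and uy: "u \<noteq> y"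
    and pa: "(pa, y) \<in> path_edges A" and pb: "(pb, y) \<in> path_edges B"
    and npa: "(pa, y) \<notin> path_edges B" and npb: "(pb, y) \<notin> path_edges A"
    and D: "is_dpath E D y v" and R: "is_dpath E R u v" and yR: "y \<notin> set R"
  shows False
proof -
  have ac: "acyc E" using acyc_cactus[OF cact] .
  define C where "C = set A \<union> set B"
  have inD: "x = y" if "x \<in> C" "x \<in> set D" for x
  proof -
    have "reach E x y" using that(1) reach_mem[OF A] reach_mem[OF B] C_def by blast
    moreover have "reach E y x" using that(2) reach_mem[OF D] by blast
    ultimately show ?thesis using reach_antisym[OF ac] by metis
  qed
  have Rh: "R \<noteq> []" "hd R = u" "last R = v" using dpath_ne[OF R] by auto
  have R0: "R ! 0 = u" using Rh by (simp add: hd_conv_nth)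
  have uC: "u \<in> C" using dpath_ne[OF A] C_def by (metis UnI1 list.set_sel(1))
  have uD: "u \<notin> set D" using inD uC uy by blast
  have Rl: "R ! (length R - 1) \<in> set D" using Rh dpath_ne[OF D] by (metis last_conv_nth last_in_set)
  have lpos: "0 < length R - 1"
  proof (rule ccontr)
    assume "\<not> 0 < length R - 1"
    then have "length R - 1 = 0" by simp
    then show False using Rl R0 uD by simp
  qed
  obtain kz where kz: "0 < kz" "kz \<le> length R - 1" "R ! kz \<in> set D" "\<forall>l. 0 < l \<and> l < kz \<longrightarrow> R ! l \<notin> set D"
    using exists_first_after[of 0 "length R - 1" "\<lambda>l. R ! l \<in> set D", OF lpos Rl] by blast
  have kzl: "kz < length R" using kz(2) lpos by simp
  have noD: "R ! l \<notin> set D" if "l < kz" for l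
  proof (cases "l = 0")
    case True then show ?thesis using R0 uD by simp
  next
    case False then show ?thesis using kz(4) that by simp
  qed
  define z where "z = R ! kz"
  have zR: "z \<in> set R" using kzl z_def by simp
  have zy: "z \<noteq> y" using zR yR by blast
  have zC: "z \<notin> C" using inD kz(3) z_def zy by blast
  obtain ic where ic: "ic \<le> kz" "R ! ic \<in> C" "\<forall>l. ic < l \<and> l \<le> kz \<longrightarrow> R ! l \<notin> C"
    using exists_last_before[of "\<lambda>l. R ! l \<in> C" kz] R0 uC by blast
  have ickz: "ic < kz" using ic zC z_def by (metis le_neq_implies_less)
  define c where "c = R ! ic"
  have cy: "c \<noteq> y" using yR ickz kzl c_def by (metis less_trans nth_mem)
  define Rz where "Rz = drop ic (take (Suc kz) R)"
  have Rt: "is_dpath E (take (Suc kz) R) u z" using dpath_take[OF R kzl] z_def by simp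
  have "is_dpath E Rz ((take (Suc kz) R) ! ic) z" using dpath_drop[OF Rt] ickz kzl Rz_def by simp
  then have Rz: "is_dpath E Rz c z" using ickz c_def by simp
  have sRz: "set Rz \<subseteq> set R" using Rz_def by (meson order_trans set_drop_subset set_take_subset)
  have yRz: "y \<notin> set Rz" using sRz yR by blast
  obtain D1 D2 where D1: "is_dpath E D1 y z" and D2: "is_dpath E D2 z v" and Deq: "D = D1 @ tl D2"
    using path_split[OF D] kz(3) z_def by metis
  have sD1: "set D1 \<subseteq> set D" using set_join_dpath[OF D1 D2] Deq by simp
  have Rint: "\<forall>x \<in> set Rz. x \<noteq> c \<longrightarrow> x \<noteq> z \<longrightarrow> x \<notin> set A \<union> set B \<and> x \<notin> set D1"
  proof (intro ballI impI)
    fix x assume x: "x \<in> set Rz" "x \<noteq> c" "x \<noteq> z"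
    obtain l where l: "ic \<le> l" "l \<le> kz" "x = R ! l" using set_sub_range[OF x(1)[unfolded Rz_def] kzl] by blast
    have "l \<noteq> ic" "l \<noteq> kz" using x l c_def z_def by auto
    then have "ic < l" "l < kz" using l by auto
    then have "x \<notin> C" "x \<notin> set D" using ic(3) noD l by auto
    then show "x \<notin> set A \<union> set B \<and> x \<notin> set D1" using sD1 C_def by auto
  qed
  have "c \<in> set A \<or> c \<in> set B" using ic(2) c_def C_def by simp
  then show False
  proof
    assume cA: "c \<in> set A"
    show False using H[OF cact A B AB pa npa D1 Rz cA cy yRz Rint] .
  next
    assume cB: "c \<in> set B"
    have BA: "set B \<inter> set A \<subseteq> {u, y}" using AB by blast
    have Rint': "\<forall>x \<in> set Rz. x \<noteq> c \<longrightarrow> x \<noteq> z \<longrightarrow> x \<notin> set B \<union> set A \<and> x \<notin> set D1" using Rint by blast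
    show False using H[OF cact B A BA pb npb D1 Rz cB cy yRz Rint'] .
  qed
qed

lemma branch_case:
  assumes cact: "cactus_network V E" and uV: "u \<in> V"
    and e1: "(u, w1) \<in> E" and e2: "(u, w2) \<in> E" and w12: "w1 \<noteq> w2"
    and r1: "reach E w1 v" and r2: "reach E w2 v"
  shows "\<exists>y. is_sbp V E u y \<and> cut E u y v \<and> y \<noteq> u"
proof -
  have ac: "acyc E" using acyc_cactus[OF cact] .
  have EV: "E \<subseteq> V \<times> V" using cact unfolding cactus_network_def by blast
  obtain Q1 where Q1: "is_dpath E Q1 w1 v" using reach_path[OF r1] by blast
  obtain Q2 where Q2: "is_dpath E Q2 w2 v" using reach_path[OF r2] by blast
  define P1 where "P1 = u # Q1"
  define P2 where "P2 = u # Q2"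
  have P1: "is_dpath E P1 u v" using dpath_Cons[OF Q1 e1] P1_def by simp
  have P2: "is_dpath E P2 u v" using dpath_Cons[OF Q2 e2] P2_def by simp
  have d1: "distinct P1" using dpath_distinct[OF ac P1] .
  have d2: "distinct P2" using dpath_distinct[OF ac P2] .
  have Q1h: "Q1 \<noteq> []" "hd Q1 = w1" using dpath_ne[OF Q1] by auto
  have Q2h: "Q2 \<noteq> []" "hd Q2 = w2" using dpath_ne[OF Q2] by auto
  have P10: "P1 ! 0 = u" and P11: "P1 ! 1 = w1" using P1_def Q1h by (auto simp: hd_conv_nth)
  have P20: "P2 ! 0 = u" and P21: "P2 ! 1 = w2" using P2_def Q2h by (auto simp: hd_conv_nth)
  have lP1: "length P1 \<ge> 2" using P1_def Q1h by (cases Q1) auto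
  have lpos: "0 < length P1 - 1" using lP1 by simp
  have vP2: "P1 ! (length P1 - 1) \<in> set P2"
  proof -
    have "P1 ! (length P1 - 1) = last P1" using lP1 by (cases P1) (auto simp: last_conv_nth)
    also have "\<dots> = last P2" using dpath_ne[OF P1] dpath_ne[OF P2] by simp
    finally show ?thesis using dpath_ne[OF P2] by (metis last_in_set)
  qed
  obtain iy where iy: "0 < iy" "iy \<le> length P1 - 1" "P1 ! iy \<in> set P2" "\<forall>l. 0 < l \<and> l < iy \<longrightarrow> P1 ! l \<notin> set P2"
    using exists_first_after[of 0 "length P1 - 1" "\<lambda>l. P1 ! l \<in> set P2", OF lpos vP2] by blast
  have iyl: "iy < length P1" using iy(2) lpos by simp
  define y where "y = P1 ! iy"
  obtain jy where jy: "jy < length P2" "P2 ! jy = y" using iy(3) y_def by (metis in_set_conv_nth)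
  have P1ne: "P1 \<noteq> []" "P2 \<noteq> []" using P1_def P2_def by auto
  have yu: "y \<noteq> u"
  proof
    assume "y = u"
    then have "P1 ! iy = P1 ! 0" using y_def P10 by simp
    then have "iy = 0" using nth_eq_iff_index_eq[OF d1 iyl, of 0] P1ne by simp
    then show False using iy by simp
  qed
  have jy0: "0 < jy" using jy yu P20 by (cases jy) auto
  define A where "A = take (Suc iy) P1"
  define B where "B = take (Suc jy) P2"
  have Ap: "is_dpath E A u y" using dpath_take[OF P1 iyl] A_def y_def dpath_ne[OF P1] by simp
  have Bp: "is_dpath E B u y" using dpath_take[OF P2 jy(1)] B_def jy(2) dpath_ne[OF P2] by simp
  have dA: "distinct A" using d1 A_def by simp
  have dB: "distinct B" using d2 B_def by simp
  have lA: "length A = Suc iy" using A_def iyl by simp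
  have lB: "length B = Suc jy" using B_def jy by simp
  have A1: "A ! 1 = w1" using A_def iy P11 by simp
  have B1: "B ! 1 = w2" using B_def jy0 P21 by simp
  have AneB: "A \<noteq> B" using A1 B1 w12 by metis
  have AB: "set A \<inter> set B \<subseteq> {u, y}"
  proof
    fix x assume x: "x \<in> set A \<inter> set B"
    then obtain l where l: "l < length A" "A ! l = x" by (metis IntD1 in_set_conv_nth)
    have xl: "x = P1 ! l" "l \<le> iy" using l A_def lA by auto
    have xP2: "x \<in> set P2" using x B_def by (meson IntD2 in_set_takeD)
    show "x \<in> {u, y}"
    proof (cases "l = 0")
      case True then show ?thesis using xl P10 by simp
    next
      case False
      show ?thesis
      proof (cases "l = iy")
        case True then show ?thesis using xl y_def by simp
      next
        case False
        then have "0 < l" "l < iy" using \<open>l \<noteq> 0\<close> xl by auto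
        then show ?thesis using iy(4) xl xP2 by blast
      qed
    qed
  qed
  define pa where "pa = P1 ! (iy - 1)"
  define pb where "pb = P2 ! (jy - 1)"
  have lastA: "last A = y" using dpath_ne[OF Ap] by simp
  have lastB: "last B = y" using dpath_ne[OF Bp] by simp
  have paE: "(pa, y) \<in> path_edges A"
  proof -
    have "length A \<ge> 2" using lA iy by simp
    then have "(A ! (length A - 2), last A) \<in> path_edges A" by (rule pe_last_edge)
    moreover have "A ! (length A - 2) = pa" using lA A_def pa_def iy by simp
    ultimately show ?thesis using lastA by simp
  qed
  have pbE: "(pb, y) \<in> path_edges B"
  proof -
    have "length B \<ge> 2" using lB jy0 by simp
    then have "(B ! (length B - 2), last B) \<in> path_edges B" by (rule pe_last_edge)
    moreover have "B ! (length B - 2) = pb" using lB B_def pb_def jy0 by simp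
    ultimately show ?thesis using lastB by simp
  qed
  have uniqA: "x = pa" if "(x, y) \<in> path_edges A" for x
    using pe_into_last_unique[OF dA, of x pa] that paE lastA by simp
  have uniqB: "x = pb" if "(x, y) \<in> path_edges B" for x
    using pe_into_last_unique[OF dB, of x pb] that pbE lastB by simp
  have paEE: "(pa, y) \<in> E" using paE dpath_path_edges_subset[OF Ap] by blast
  have pbEE: "(pb, y) \<in> E" using pbE dpath_path_edges_subset[OF Bp] by blast
  have papb: "pa \<noteq> pb"
  proof
    assume eq: "pa = pb"
    have "pa \<in> set A" "pb \<in> set B" using paE pbE pe_fst by metis+
    then have "pa \<in> {u, y}" using AB eq by blast
    moreover have "pa \<noteq> y" using acyc_edge_neq[OF ac paEE] .
    ultimately have pau: "pa = u" by simp
    have "P1 ! (iy - 1) = P1 ! 0" using pau pa_def P10 by simp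
    then have "iy - 1 = 0" using nth_eq_iff_index_eq[OF d1, of "iy - 1" 0] iyl P1ne by simp
    then have "iy = 1" using iy by simp
    then have "y = w1" using y_def P11 by simp
    have "P2 ! (jy - 1) = P2 ! 0" using pau eq pb_def P20 by simp
    then have "jy - 1 = 0" using nth_eq_iff_index_eq[OF d2, of "jy - 1" 0] jy P1ne by simp
    then have "jy = 1" using jy0 by simp
    then have "y = w2" using jy P21 by simp
    then show False using \<open>y = w1\<close> w12 by simp
  qed
  have npa: "(pa, y) \<notin> path_edges B" using uniqB papb by blast
  have npb: "(pb, y) \<notin> path_edges A" using uniqA papb by blast
  have yA: "y \<in> set A" using dpath_ne[OF Ap] by (metis last_in_set)
  have uA: "u \<in> set A" using dpath_ne[OF Ap] by (metis list.set_sel(1))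
  have ruy: "reach E u y" using dpath_reach[OF Ap] .
  have par: "parents E y = {pa, pb}"
  proof
    show "{pa, pb} \<subseteq> parents E y" using paEE pbEE unfolding parents_def by simp
    show "parents E y \<subseteq> {pa, pb}"
    proof
      fix p assume "p \<in> parents E y"
      then have py: "(p, y) \<in> E" unfolding parents_def by simp
      show "p \<in> {pa, pb}"
      proof (rule ccontr)
        assume pn: "p \<notin> {pa, pb}"
        have pV: "p \<in> V" using py EV by blast
        obtain w3 where w3: "w3 \<in> V" "reach E w3 u" "reach E w3 p"
          "\<forall>w'. w' \<noteq> w3 \<and> reach E w3 w' \<and> reach E w' u \<and> reach E w' p \<longrightarrow> False"
          using lca_exists[OF cact uV pV] by blast
        obtain X where X: "is_dpath E X w3 u" using reach_path[OF w3(2)] by blast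
        obtain Y where Y: "is_dpath E Y w3 p" using reach_path[OF w3(3)] by blast
        have XY: "z = w3" if "z \<in> set X" "z \<in> set Y" for z
          using w3(4) reach_mem[OF X that(1)] reach_mem[OF Y that(2)] by blast
        have notF: "(p, y) \<notin> path_edges A \<union> path_edges B" using uniqA uniqB pn by blast
        have Ysn: "is_dpath E (Y @ [y]) w3 y" using dpath_snoc[OF Y py] .
        have peYs: "path_edges (Y @ [y]) = insert (p, y) (path_edges Y)"
          using pe_snoc[of Y y] dpath_ne[OF Y] by simp
        have yY: "y \<notin> set Y"
        proof
          assume "y \<in> set Y"
          then have "reach E y p" using reach_mem[OF Y] by blast
          then show False using acyc_edge_reach[OF ac py] by blast
        qed
        show False
        proof (cases "w3 = u")
          case True
          have "\<not> path_edges (Y @ [y]) \<subseteq> path_edges A \<union> path_edges B" using peYs notF by blast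
          then show False using DEL[OF cact Ap Bp AneB AB Ysn] uA yA True by blast
        next
          case w3u: False
          show False
          proof (cases "\<exists>z \<in> set Y. z \<in> set A \<union> set B")
            case True
            then obtain z where z: "z \<in> set Y" "z \<in> set A \<union> set B" by blast
            have zY: "z \<in> set (Y @ [y])" using z by simp
            obtain Y1 Y2 where Y1: "is_dpath E Y1 w3 z" and Y2: "is_dpath E Y2 z y" and Yeq: "Y @ [y] = Y1 @ tl Y2"
              using path_split[OF Ysn zY] by metis
            have "y \<notin> set Y1"
            proof
              assume "y \<in> set Y1"
              then have "reach E y z" using reach_mem[OF Y1] by blast
              moreover have "reach E z p" using reach_mem[OF Y z(1)] by blast
              ultimately show False using acyc_edge_reach[OF ac py] reach_trans by metis
            qed
            then have "(p, y) \<notin> path_edges Y1" using pe_snd by metis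
            moreover have "(p, y) \<in> path_edges Y1 \<union> path_edges Y2" using peYs pe_join_dpath[OF Y1 Y2] Yeq by simp
            ultimately have "(p, y) \<in> path_edges Y2" by blast
            then have "\<not> path_edges Y2 \<subseteq> path_edges A \<union> path_edges B" using notF by blast
            then show False using DEL[OF cact Ap Bp AneB AB Y2] z yA by blast
          next
            case False
            then have YC: "\<forall>z \<in> set Y. z \<notin> set A \<union> set B" by blast
            define Pa where "Pa = X @ tl A"
            define Pb where "Pb = Y @ [y]"
            have Pa: "is_dpath E Pa w3 y" using dpath_concat[OF X Ap] Pa_def by simp
            have Pb: "is_dpath E Pb w3 y" using Ysn Pb_def by simp
            have sPa: "set Pa = set X \<union> set A" using set_join_dpath[OF X Ap] Pa_def by simp
            have sPb: "set Pb = insert y (set Y)" using Pb_def by simp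
            have "u \<notin> set Pb" using sPb YC uA yu by auto
            then have ne: "Pa \<noteq> Pb" using sPa uA by auto
            have disj: "set Pa \<inter> set Pb \<subseteq> {w3, y}"
            proof
              fix x assume x: "x \<in> set Pa \<inter> set Pb"
              show "x \<in> {w3, y}"
              proof (cases "x = y")
                case True then show ?thesis by simp
              next
                case False
                then have "x \<in> set Y" using x sPb by auto
                then have "x \<notin> set A" using YC by blast
                then have "x \<in> set X" using x sPa by auto
                then show ?thesis using XY \<open>x \<in> set Y\<close> by blast
              qed
            qed
            have yX: "y \<notin> set X"
            proof
              assume "y \<in> set X"
              then have "reach E y u" using reach_mem[OF X] by blast
              then show False using reach_antisym[OF ac ruy] yu by metis
            qed
            have pePa: "path_edges Pa = path_edges X \<union> path_edges A" using pe_join_dpath[OF X Ap] Pa_def by simp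
            have pePb: "path_edges Pb = insert (p, y) (path_edges Y)" using peYs Pb_def by simp
            have n1: "(pb, y) \<notin> path_edges X" using yX pe_snd by metis
            have n2: "(pb, y) \<notin> path_edges Y" using yY pe_snd by metis
            have n3: "(pb, y) \<noteq> (p, y)" using pn by auto
            have "(pb, y) \<notin> path_edges Pa \<union> path_edges Pb" using pePa pePb n1 n2 n3 npb by blast
            then have "\<not> path_edges B \<subseteq> path_edges Pa \<union> path_edges Pb" using pbE by blast
            moreover have "u \<in> set Pa \<union> set Pb" "y \<in> set Pa \<union> set Pb" using sPa uA yA by auto
            ultimately show False using DEL[OF cact Pa Pb ne disj Bp] by blast
          qed
        qed
      qed
    qed
  qed
  have lca: "is_lca V E {pa, pb} u"
    unfolding is_lca_def
  proof (intro conjI allI impI ballI)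
    show "u \<in> V" by fact
    fix a assume "a \<in> {pa, pb}"
    have "reach E u pa" using reach_mem[OF Ap pe_fst[OF paE]] by blast
    moreover have "reach E u pb" using reach_mem[OF Bp pe_fst[OF pbE]] by blast
    ultimately show "reach E u a" using \<open>a \<in> {pa, pb}\<close> by blast
  next
    fix w' assume w': "w' \<noteq> u \<and> reach E u w' \<and> (\<forall>a \<in> {pa, pb}. reach E w' a)"
    have rw: "reach E u w'" "reach E w' pa" "reach E w' pb" using w' by auto
    obtain Z where Z: "is_dpath E Z u w'" using reach_path[OF rw(1)] by blast
    obtain Za where Za: "is_dpath E Za w' pa" using reach_path[OF rw(2)] by blast
    obtain Zb where Zb: "is_dpath E Zb w' pb" using reach_path[OF rw(3)] by blast
    have Zas: "is_dpath E (Za @ [y]) w' y" using dpath_snoc[OF Za paEE] .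
    have Zbs: "is_dpath E (Zb @ [y]) w' y" using dpath_snoc[OF Zb pbEE] .
    have hZ: "hd (Za @ [y]) = w'" "hd (Zb @ [y]) = w'" "Za @ [y] \<noteq> []" "Zb @ [y] \<noteq> []" using dpath_ne[OF Zas] dpath_ne[OF Zbs] by auto
    have peZa: "(pa, y) \<in> path_edges (Za @ [y])" using pe_snoc[of Za y] dpath_ne[OF Za] by simp
    have peZb: "(pb, y) \<in> path_edges (Zb @ [y])" using pe_snoc[of Zb y] dpath_ne[OF Zb] by simp
    have hdA: "hd A = u" "hd B = u" using dpath_ne[OF Ap] dpath_ne[OF Bp] by auto
    show False
    proof (cases "w' \<in> set A")
      case True
      show False
      proof (cases "path_edges (Zb @ [y]) \<subseteq> path_edges A \<union> path_edges B")
        case True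
        have "path_edges (Zb @ [y]) \<subseteq> path_edges A"
          using follow[OF True hZ(4) _ _ dA dB hdA(1) lastB AB] \<open>w' \<in> set A\<close> w' hZ by simp
        then show False using peZb npb by blast
      next
        case False
        then show False using DEL[OF cact Ap Bp AneB AB Zbs] \<open>w' \<in> set A\<close> yA by blast
      qed
    next
      case wA: False
      show False
      proof (cases "w' \<in> set B")
        case True
        have BA: "set B \<inter> set A \<subseteq> {u, y}" using AB by blast
        show False
        proof (cases "path_edges (Za @ [y]) \<subseteq> path_edges B \<union> path_edges A")
          case True
          have "path_edges (Za @ [y]) \<subseteq> path_edges B"
            using follow[OF True hZ(3) _ _ dB dA hdA(2) lastA BA] \<open>w' \<in> set B\<close> w' hZ by simp
          then show False using peZa npa by blast
        next
          case False
          then have "\<not> path_edges (Za @ [y]) \<subseteq> path_edges A \<union> path_edges B" by blast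
          then show False using DEL[OF cact Ap Bp AneB AB Zas] \<open>w' \<in> set B\<close> yA by blast
        qed
      next
        case wB: False
        define R where "R = Z @ tl (Zb @ [y])"
        have R: "is_dpath E R u y" using dpath_concat[OF Z Zbs] R_def by simp
        have peR: "path_edges R = path_edges Z \<union> path_edges (Zb @ [y])" using pe_join_dpath[OF Z Zbs] R_def by simp
        have "w' \<in> set Z" "w' \<noteq> hd Z" using dpath_ne[OF Z] w' by (auto intro: last_in_set)
        then obtain x where "(x, w') \<in> path_edges Z" using in_pe_pred by metis
        moreover have "(x, w') \<notin> path_edges A" using wA pe_snd by metis
        moreover have "(x, w') \<notin> path_edges B" using wB pe_snd by metis
        ultimately have "\<not> path_edges R \<subseteq> path_edges A \<union> path_edges B" using peR by blast
        then show False using DEL[OF cact Ap Bp AneB AB R] uA yA by blast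
      qed
    qed
  qed
  have cutuy: "cut E u y v"
    unfolding cut_def
  proof (intro conjI allI impI)
    show "reach E u y" by fact
    show "reach E y v" using reach_mem[OF P1] iyl y_def by simp
    fix R assume R: "is_dpath E R u v"
    have D: "is_dpath E (drop iy P1) y v" using dpath_drop[OF P1 iyl] y_def by simp
    show "y \<in> set R"
    proof (rule ccontr)
      assume "y \<notin> set R"
      then show False using F3core[OF cact Ap Bp AB yu[symmetric] paE pbE npa npb D R] by blast
    qed
  qed
  have yV: "y \<in> V" using paEE EV by blast
  have sink: "is_sink E y" unfolding is_sink_def par using papb by simp
  have "is_sbp V E u y" unfolding is_sbp_def using yV sink lca par by simp
  then show ?thesis using cutuy yu by blast
qed


lemma reach_V:
  assumes "reach E a x" "a \<in> V" "E \<subseteq> V \<times> V"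
  shows "x \<in> V"
  using assms(1) unfolding reach_def
proof (induction rule: rtrancl_induct)
  case base then show ?case using assms(2) .
next
  case (step y z) then show ?case using assms(3) by blast
qed

lemma second_vertex:
  assumes "is_dpath E ys a b" "a \<noteq> b"
  shows "(a, ys ! 1) \<in> E \<and> is_dpath E (drop 1 ys) (ys ! 1) b \<and> ys = a # drop 1 ys \<and> 1 < length ys"
proof -
  have h: "ys \<noteq> []" "hd ys = a" "last ys = b" using dpath_ne[OF assms(1)] by auto
  have l: "1 < length ys"
  proof (rule ccontr)
    assume "\<not> 1 < length ys"
    then have "length ys = 1" using h(1) by (cases ys) auto
    then obtain c where "ys = [c]" by (cases ys) auto
    then show False using h assms(2) by simp
  qed
  have y0: "ys ! 0 = a" using h by (simp add: hd_conv_nth)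
  have e: "(ys ! 0, ys ! Suc 0) \<in> E" using assms(1) l unfolding is_dpath_def by auto
  have d: "is_dpath E (drop 1 ys) (ys ! 1) b" using dpath_drop[OF assms(1)] l by simp
  have "ys = a # drop 1 ys" using h by (cases ys) auto
  then show ?thesis using e y0 d l by simp
qed

lemma main_BP:
  assumes cact: "cactus_network V E"
  shows "u \<in> V \<Longrightarrow> reach E u v \<Longrightarrow> BP V E u v"
proof (induction "card (paths_V E u v)" arbitrary: u rule: less_induct)
  case less
  have ac: "acyc E" using acyc_cactus[OF cact] .
  have EV: "E \<subseteq> V \<times> V" using cact unfolding cactus_network_def by blast
  have finV: "finite V" using cact unfolding cactus_network_def by blast
  have sub: "paths_V E u v \<subseteq> V"
  proof
    fix x assume "x \<in> paths_V E u v"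
    then obtain xs where xs: "is_dpath E xs u v" "x \<in> set xs" unfolding paths_V_iff by blast
    then have "reach E u x" using reach_mem by metis
    then show "x \<in> V" using reach_V less.prems(1) EV by metis
  qed
  have fin: "finite (paths_V E u v)" using finite_subset[OF sub finV] .
  obtain xs where xs: "is_dpath E xs u v" using reach_path[OF less.prems(2)] by blast
  have uin: "u \<in> paths_V E u v" using xs dpath_ne[OF xs] unfolding paths_V_iff by (metis list.set_sel(1))
  have smaller: "card (paths_V E w v) < card (paths_V E u v)"
    if "paths_V E w v \<subseteq> paths_V E u v" "u \<notin> paths_V E w v" for w
  proof -
    have "paths_V E w v \<subset> paths_V E u v" using that uin by blast
    then show ?thesis using psubset_card_mono[OF fin] by blast
  qed
  have notin: "u \<notin> paths_V E w v" if "reach E u w" "u \<noteq> w" for w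
  proof
    assume "u \<in> paths_V E w v"
    then obtain ys where "is_dpath E ys w v" "u \<in> set ys" unfolding paths_V_iff by blast
    then have "reach E w u" using reach_mem by metis
    then show False using reach_antisym[OF ac that(1)] that(2) by metis
  qed
  show "BP V E u v"
  proof (cases "u = v")
    case True
    then show ?thesis using BP.BP_uniq[OF uniq_refl[OF ac]] by simp
  next
    case uv: False
    have sv: "(u, xs ! 1) \<in> E" "is_dpath E (drop 1 xs) (xs ! 1) v" using second_vertex[OF xs uv] by auto
    define w0 where "w0 = xs ! 1"
    define N where "N = {w. (u, w) \<in> E \<and> reach E w v}"
    have "reach E (xs ! 1) v" using dpath_reach[OF sv(2)] .
    then have w0N: "w0 \<in> N" using sv(1) unfolding w0_def N_def by blast
    show ?thesis
    proof (cases "\<exists>w1 w2. w1 \<in> N \<and> w2 \<in> N \<and> w1 \<noteq> w2")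
      case True
      then obtain w1 w2 where w: "(u, w1) \<in> E" "reach E w1 v" "(u, w2) \<in> E" "reach E w2 v" "w1 \<noteq> w2"
        unfolding N_def by blast
      obtain y where y: "is_sbp V E u y" "cut E u y v" "y \<noteq> u"
        using branch_case[OF cact less.prems(1) w(1) w(3) w(5) w(2) w(4)] by blast
      have spl: "paths_V E u v = paths_V E u y \<union> paths_V E y v" using cut_split[OF y(2)] by blast
      have ruy: "reach E u y" "reach E y v" using cut_reach[OF y(2)] by auto
      have yV: "y \<in> V" using y(1) unfolding is_sbp_def by blast
      have "card (paths_V E y v) < card (paths_V E u v)"
        using smaller[of y] spl notin[OF ruy(1)] y(3) by blast
      then have BPy: "BP V E y v" using less.hyps yV ruy(2) by blast
      show ?thesis using BP.BP_step[OF uniq_refl[OF ac] y(1) BPy cut_refl[OF less.prems(2)] y(2)] .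
    next
      case False
      then have N1: "\<And>w. w \<in> N \<Longrightarrow> w = w0" using w0N by blast
      have uw0: "(u, w0) \<in> E" using sv w0_def by simp
      have rw0: "reach E w0 v" using w0N N_def by simp
      have cut0: "cut E u w0 v"
        unfolding cut_def
      proof (intro conjI allI impI)
        show "reach E u w0" using edge_reach[OF uw0] .
        show "reach E w0 v" by fact
        fix ys assume ys: "is_dpath E ys u v"
        have s2: "(u, ys ! 1) \<in> E" "is_dpath E (drop 1 ys) (ys ! 1) v" "1 < length ys"
          using second_vertex[OF ys uv] by auto
        have "reach E (ys ! 1) v" using dpath_reach[OF s2(2)] .
        then have "ys ! 1 \<in> N" unfolding N_def using s2(1) by blast
        then have "ys ! 1 = w0" using N1 by blast
        then show "w0 \<in> set ys" using s2(3) by (metis nth_mem)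
      qed
      have uq: "uniq E u w0"
        unfolding uniq_def
      proof (rule ex1I[of _ "[u, w0]"])
        show "is_dpath E [u, w0] u w0" using dpath_Cons[OF _ uw0, of "[w0]" w0] by simp
        fix p assume p: "is_dpath E p u w0"
        have uw: "u \<noteq> w0" using acyc_edge_neq[OF ac uw0] .
        have s2: "(u, p ! 1) \<in> E" "is_dpath E (drop 1 p) (p ! 1) w0" "p = u # drop 1 p"
          using second_vertex[OF p uw] by auto
        have "reach E (p ! 1) v" using reach_trans[OF dpath_reach[OF s2(2)] rw0] .
        then have "p ! 1 \<in> N" unfolding N_def using s2(1) by blast
        then have "p ! 1 = w0" using N1 by blast
        then have "drop 1 p = [w0]" using dpath_loop[OF ac] s2(2) by metis
        then show "p = [u, w0]" using s2(3) by simp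
      qed
      have spl: "paths_V E u v = paths_V E u w0 \<union> paths_V E w0 v" using cut_split[OF cut0] by blast
      have "u \<noteq> w0" using acyc_edge_neq[OF ac uw0] .
      then have "card (paths_V E w0 v) < card (paths_V E u v)"
        using smaller[of w0] spl notin[OF edge_reach[OF uw0]] by blast
      moreover have "w0 \<in> V" using uw0 EV by blast
      ultimately have BPw: "BP V E w0 v" using less.hyps rw0 by blast
      show ?thesis using BP_comp[OF BP.BP_uniq[OF uq] ac BPw cut0] .
    qed
  qed
qed

theorem lemma6:
  fixes V :: "'a set" and E :: "('a \<times> 'a) set" and u v :: 'a
  assumes "cactus_network V E" and "u \<in> V" and "v \<in> V" and "reach E u v"
  shows "\<exists>(m::nat) (s::nat \<Rightarrow> 'a) (t::nat \<Rightarrow> 'a).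
     let a = (\<lambda>j. if j = 0 then u else t j);
         b = (\<lambda>j. if j = m then v else s (Suc j))
     in (\<forall>j \<in> {1..m}. is_sbp V E (s j) (t j)) \<and>
        (\<forall>j \<in> {0..m}. \<exists>!xs. is_dpath E xs (a j) (b j)) \<and>
        paths_V E u v = (\<Union>j \<in> {0..m}. paths_V E (a j) (b j)) \<union> (\<Union>j \<in> {1..m}. sbp_V E (s j) (t j)) \<and>
        paths_E E u v = (\<Union>j \<in> {0..m}. paths_E E (a j) (b j)) \<union> (\<Union>j \<in> {1..m}. sbp_E E (s j) (t j))"
proof -
  have "BP V E u v" using main_BP[OF assms(1) assms(2) assms(4)] .
  then have "Dec V E u v" using BP_Dec[OF _ acyc_cactus[OF assms(1)]] by metis
  then show ?thesis unfolding Dec_def .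
qed

end
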